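(* Any trajectory $(q(t),X(t),\mu(t),r(t))$ of the elastic-demand dynamics \begin{align*} \dot{q}_j &= \sum_{i=1}^m x_{ij} - \frac{q_j}{T}, \quad j=1,\ldots,n,\\ \mu_j(q_j) &= T\left[1-\frac{c_j}{q_j}\right]^+, \quad j=1,\ldots,n,\\ x_{ij} &= r_i\,\delta_{ij}(\mu),\qquad \delta_{ij}(\mu)=\frac{e^{-(\kappa_{ij}+\mu_j)/\epsilon}}{\sum_{k=1}^n e^{-(\kappa_{ik}+\mu_k)/\epsilon}},\\ r_i &= \bar{r}_i\, p_i\big(\varphi^i_\epsilon(\mu)\big),\qquad \varphi^i_\epsilon(\mu)=-\epsilon\log\Big(\sum_{j=1}^n e^{-(\kappa_{ij}+\mu_j)/\epsilon}\Big), \end{align*} converges asymptotically to the (unique) equilibrium point $(X^*,q^*,\mu^*,r^* )$ of these dynamics, which is characterized as follows: $(r^*,\mu^* )$ is the unique saddle point (minimum in $r$, maximum in $\mu$) over $r\in\prod_{i=1}^m[0,\bar r_i]$, $\mu\in[0,T)^n$ of \[ W(r,\mu)=\sum_i\big[r_i\varphi^i_\epsilon(\mu)-U_i(r_i)\big]+\sum_j c_j\log\Big(1-\frac{\mu_j}{T}\Big), \] and, given $r^*$, $(X^*,q^* )$ is the unique solution of the convex program \[ \min_{X,q}\ \sum_{i,j}\kappa_{ij}x_{ij}+\sum_j\beta_j(q_j)+\epsilon\sum_{i,j}x_{ij}\log\Big(\frac{x_{ij}}{r^*_i}\Big) \] subject to $x_{ij}\ge 0$, $\sum_j x_{ij}=r^*_i$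 for all $i$, and $\sum_i x_{ij}=q_j/T$ for all $j$, where $\beta_j(q_j)=\int_0^{q_j}[1-c_j/\sigma]^+\,d\sigma$.
   Context: There are $n$ EV charging stations with capacities $c_j>0$ and $m$ demand locations with exogenous constant transport times $\kappa_{ij}$; $T>0$ is the mean sojourn time, $\epsilon>0$ a smoothing parameter, and $[\cdot]^+=\max\{\cdot,0\}$. $q_j$ is the queue at station $j$, $\mu_j$ its waiting delay, $x_{ij}$ the rate from location $i$ to station $j$. Demand at location $i$ is elastic: $\bar r_i>0$ is the maximum request rate and $p_i(\tau)=\mathcal{P}(T_i>\tau)$ is the complementary CDF of an absolutely continuous willingness-to-wait variable $T_i$, continuous and decreasing from 1 to 0 on $[0,\infty)$. The utility $U_i$ is increasing and concave with $r_i=\arg\max_{r_i\ge0}[U_i(r_i)-\tau_i r_i]=\bar r_i p_i(\tau_i)$ (i.e. $U_i'$ is the inverse of $\tau\mapsto \bar r_i p_i(\tau)$), and $U_i$ is assumed strictly concave on $[0,\bar r_i]$. The dynamics have a globally Lipschitz right-hand side in $q$, so solutions exist, are unique and defined for all time. *)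

theory Defs
  imports "HOL-Analysis.Analysis"
begin

definition strictly_concave_on :: "real set \<Rightarrow> (real \<Rightarrow> real) \<Rightarrow> bool" where
  "strictly_concave_on S f \<longleftrightarrow> convex S \<and>
     (\<forall>x\<in>S. \<forall>y\<in>S. x \<noteq> y \<longrightarrow> (\<forall>u. 0 < u \<and> u < 1 \<longrightarrow>
        f (u * x + (1 - u) * y) > u * f x + (1 - u) * f y))"

(* waiting delay mu_j(q_j) = T [1 - c_j/q_j]^+ ; for q_j \<le> c_j it is 0
   (this also fixes the value at q_j = 0, where c_j/q_j is undefined) *)
definition delay :: "real \<Rightarrow> real \<Rightarrow> real \<Rightarrow> real" where
  "delay T c q = (if q \<le> c then 0 else T * (1 - c / q))"

definition softmin :: "real \<Rightarrow> ('s::finite \<Rightarrow> real) \<Rightarrow> ('s \<Rightarrow> real) \<Rightarrow> real" where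
  "softmin eps kap mu = - eps * ln (\<Sum>k\<in>UNIV. exp (- (kap k + mu k) / eps))"

definition logit :: "real \<Rightarrow> ('s::finite \<Rightarrow> real) \<Rightarrow> ('s \<Rightarrow> real) \<Rightarrow> 's \<Rightarrow> real" where
  "logit eps kap mu j =
     exp (- (kap j + mu j) / eps) / (\<Sum>k\<in>UNIV. exp (- (kap k + mu k) / eps))"

definition beta :: "real \<Rightarrow> real \<Rightarrow> real" where
  "beta c q = integral {0..q} (\<lambda>\<sigma>. if \<sigma> \<le> c then 0 else 1 - c / \<sigma>)"

(* x log(x / r) with the convention 0 log 0 = 0 *)
definition xlogx_rel :: "real \<Rightarrow> real \<Rightarrow> real" where
  "xlogx_rel x r = (if x = 0 then 0 else x * ln (x / r))"

definition Wfun :: "real \<Rightarrow> real \<Rightarrow> ('l::finite \<Rightarrow> 's::finite \<Rightarrow> real) \<Rightarrow> ('s \<Rightarrow> real)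
    \<Rightarrow> ('l \<Rightarrow> real \<Rightarrow> real) \<Rightarrow> ('l \<Rightarrow> real) \<Rightarrow> ('s \<Rightarrow> real) \<Rightarrow> real" where
  "Wfun T eps kap c U r mu =
     (\<Sum>i\<in>UNIV. r i * softmin eps (kap i) mu - U i (r i))
     + (\<Sum>j\<in>UNIV. c j * ln (1 - mu j / T))"

definition saddle_point :: "real \<Rightarrow> real \<Rightarrow> ('l::finite \<Rightarrow> 's::finite \<Rightarrow> real) \<Rightarrow> ('s \<Rightarrow> real)
    \<Rightarrow> ('l \<Rightarrow> real \<Rightarrow> real) \<Rightarrow> ('l \<Rightarrow> real) \<Rightarrow> ('l \<Rightarrow> real) \<Rightarrow> ('s \<Rightarrow> real) \<Rightarrow> bool" where
  "saddle_point T eps kap c U rbar r mu \<longleftrightarrow>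
     (\<forall>i. 0 \<le> r i \<and> r i \<le> rbar i) \<and> (\<forall>j. 0 \<le> mu j \<and> mu j < T) \<and>
     (\<forall>r' mu'. (\<forall>i. 0 \<le> r' i \<and> r' i \<le> rbar i) \<longrightarrow> (\<forall>j. 0 \<le> mu' j \<and> mu' j < T) \<longrightarrow>
        Wfun T eps kap c U r mu' \<le> Wfun T eps kap c U r mu \<and>
        Wfun T eps kap c U r mu \<le> Wfun T eps kap c U r' mu)"

definition feasible :: "real \<Rightarrow> ('l::finite \<Rightarrow> real) \<Rightarrow> ('l \<Rightarrow> 's::finite \<Rightarrow> real) \<Rightarrow> ('s \<Rightarrow> real) \<Rightarrow> bool" where
  "feasible T r X q \<longleftrightarrow> (\<forall>i j. X i j \<ge> 0) \<and> (\<forall>i. (\<Sum>j\<in>UNIV. X i j) = r i)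
     \<and> (\<forall>j. (\<Sum>i\<in>UNIV. X i j) = q j / T)"

definition objective :: "real \<Rightarrow> ('l::finite \<Rightarrow> 's::finite \<Rightarrow> real) \<Rightarrow> ('s \<Rightarrow> real) \<Rightarrow> ('l \<Rightarrow> real)
    \<Rightarrow> ('l \<Rightarrow> 's \<Rightarrow> real) \<Rightarrow> ('s \<Rightarrow> real) \<Rightarrow> real" where
  "objective eps kap c r X q =
     (\<Sum>i\<in>UNIV. \<Sum>j\<in>UNIV. kap i j * X i j) + (\<Sum>j\<in>UNIV. beta (c j) (q j))
     + eps * (\<Sum>i\<in>UNIV. \<Sum>j\<in>UNIV. xlogx_rel (X i j) (r i))"

end

theory Submission
  imports Defs
begin


lemma ccdf_repr:
  fixes f :: "real \<Rightarrow> real"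
  assumes fn: "\<And>x. f x \<ge> 0" and fs: "\<And>x. x < 0 \<Longrightarrow> f x = 0"
    and fp: "(f has_integral 1) {0..}" and b: "b \<ge> 0" "-b \<le> \<tau>"
  shows "f integrable_on {-b..\<tau>}"
    and "((\<lambda>x. if x \<in> {\<tau><..} then f x else 0) has_integral (1 - integral {-b..\<tau>} f)) UNIV"
    and "integral {\<tau><..} f = 1 - integral {-b..\<tau>} f"
proof -
  have fU: "(f has_integral 1) UNIV"
  proof -
    have "(\<lambda>x. if x \<in> {0..} then f x else 0) = f" using fs by (auto simp: fun_eq_iff)
    thus ?thesis using fp has_integral_restrict_UNIV[of "{0..}" f 1] by simp
  qed
  show fi: "f integrable_on {-b..\<tau>}"
    using integrable_on_subcbox[of f UNIV "-b" \<tau>] fU by auto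
  have r: "((\<lambda>x. if x \<in> {-b..\<tau>} then f x else 0) has_integral integral {-b..\<tau>} f) UNIV"
    using fi has_integral_restrict_UNIV by (metis integrable_integral)
  have eq: "(\<lambda>x. if x \<in> {\<tau><..} then f x else 0) = (\<lambda>x. f x - (if x \<in> {-b..\<tau>} then f x else 0))"
    using fs b by (auto simp: fun_eq_iff)
  show h: "((\<lambda>x. if x \<in> {\<tau><..} then f x else 0) has_integral (1 - integral {-b..\<tau>} f)) UNIV"
    unfolding eq by (rule has_integral_diff[OF fU r])
  then show "integral {\<tau><..} f = 1 - integral {-b..\<tau>} f"
    using has_integral_restrict_UNIV by (metis integral_unique)
qed

lemma ccdf_props:
  fixes f :: "real \<Rightarrow> real"
  assumes fn: "\<And>x. f x \<ge> 0" and fs: "\<And>x. x < 0 \<Longrightarrow> f x = 0"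
    and fp: "(f has_integral 1) {0..}"
  defines "P \<equiv> (\<lambda>\<tau>. integral {\<tau><..} f)"
  shows "P \<tau> \<ge> 0" and "P \<tau> \<le> 1" and "\<tau> \<le> \<tau>' \<Longrightarrow> P \<tau>' \<le> P \<tau>"
    and "\<tau> < 0 \<Longrightarrow> P \<tau> = 1" and "isCont P \<tau>"
proof -
  define b where "b = \<bar>\<tau>\<bar> + \<bar>\<tau>'\<bar> + 1"
  have b0: "b \<ge> 0" "-b \<le> \<tau>" "-b \<le> \<tau>'" unfolding b_def by auto
  have R1: "\<And>t. -b \<le> t \<Longrightarrow> f integrable_on {-b..t}"
    using ccdf_repr(1)[of f b] fn fs fp b0(1) by blast
  have R2: "\<And>t. -b \<le> t \<Longrightarrow> ((\<lambda>x. if x \<in> {t<..} then f x else 0) has_integral (1 - integral {-b..t} f)) UNIV"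
    using ccdf_repr(2)[of f b] fn fs fp b0(1) by blast
  have R3: "\<And>t. -b \<le> t \<Longrightarrow> integral {t<..} f = 1 - integral {-b..t} f"
    using ccdf_repr(3)[of f b] fn fs fp b0(1) by blast
  note R = R1 R2 R3
  have "0 \<le> 1 - integral {-b..\<tau>} f"
    by (rule has_integral_nonneg[OF R(2)[OF b0(2)]]) (simp add: fn)
  then show "P \<tau> \<ge> 0" unfolding P_def R(3)[OF b0(2)] .
  show "P \<tau> \<le> 1"
    unfolding P_def R(3)[OF b0(2)] using integral_nonneg[OF R(1)[OF b0(2)]] fn by simp
  show "\<tau> \<le> \<tau>' \<Longrightarrow> P \<tau>' \<le> P \<tau>"
    unfolding P_def R(3)[OF b0(2)] R(3)[OF b0(3)]
    using integral_subset_le[of "{-b..\<tau>}" "{-b..\<tau>'}" f] R(1)[OF b0(2)] R(1)[OF b0(3)] fn by auto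
  show "\<tau> < 0 \<Longrightarrow> P \<tau> = 1"
  proof -
    assume "\<tau> < 0"
    have "integral {-b..\<tau>} f = integral {-b..\<tau>} (\<lambda>x. 0)"
      by (rule integral_cong) (use fs \<open>\<tau> < 0\<close> in auto)
    then show ?thesis unfolding P_def R(3)[OF b0(2)] by simp
  qed
  have co: "continuous_on {-b..b} (\<lambda>x. integral {-b..x} f)"
    by (rule indefinite_integral_continuous_1) (use R(1)[of b] b0 in simp)
  have co2: "continuous_on {-b..b} P"
    apply (rule continuous_on_eq[of _ "\<lambda>x. 1 - integral {-b..x} f"])
    using co apply (intro continuous_intros) apply simp
    unfolding P_def using R(3) by auto
  show "isCont P \<tau>"
  proof -
    have "\<tau> \<in> interior {-b..b}" unfolding b_def by auto
    then show ?thesis using continuous_on_interior[OF co2] by blast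
  qed
qed


definition gfun :: "real \<Rightarrow> real \<Rightarrow> real" where
  "gfun c s = (if s \<le> c then 0 else 1 - c / s)"
definition Gfun :: "real \<Rightarrow> real \<Rightarrow> real" where
  "Gfun c s = (if s \<le> c then 0 else s - c - c * ln (s / c))"

lemma delay_g: "delay T c s = T * gfun c s"
  by (simp add: delay_def gfun_def)

lemma g_alt: "c > 0 \<Longrightarrow> gfun c s = 1 - c / max s c"
  by (auto simp: gfun_def max_def)

lemma g_cont: "c > 0 \<Longrightarrow> isCont (gfun c) s"
proof -
  assume c: "c > 0"
  have "isCont (\<lambda>s. 1 - c / max s c) s"
    using c by (intro continuous_intros) auto
  moreover have "gfun c = (\<lambda>s. 1 - c / max s c)" by (rule ext) (rule g_alt[OF c])
  ultimately show ?thesis by simp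
qed

lemma g_range: "c > 0 \<Longrightarrow> 0 \<le> gfun c s \<and> gfun c s < 1"
  by (auto simp: gfun_def)

lemma g_mono: assumes "c > 0" "s \<le> s'" shows "gfun c s \<le> gfun c s'"
proof (cases "s \<le> c")
  case True then show ?thesis using assms g_range[of c s'] by (simp add: gfun_def)
next
  case False
  then have "c / s' \<le> c / s" using assms by (intro divide_left_mono) auto
  then show ?thesis using False assms by (simp add: gfun_def)
qed

lemma g_lip: assumes "c > 0" "s \<le> s'" shows "gfun c s' - gfun c s \<le> (s' - s) / c"
proof (cases "s' \<le> c")
  case True then show ?thesis using assms by (auto simp: gfun_def)
next
  case False
  then have s'p: "s' > c" by simp
  show ?thesis
  proof (cases "s \<le> c")
    case True
    have "1 - c / s' = (s' - c) / s'" using s'p assms by (simp add: field_simps)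
    also have "\<dots> \<le> (s' - c) / c" using s'p assms by (intro divide_left_mono) auto
    also have "\<dots> \<le> (s' - s) / c" using True assms by (intro divide_right_mono) auto
    finally show ?thesis using True s'p by (simp add: gfun_def)
  next
    case False
    have "(1 - c / s') - (1 - c / s) = c * (s' - s) / (s * s')"
      using False s'p assms by (simp add: field_simps)
    also have "\<dots> \<le> (s' - s) / c"
    proof -
      have "c * c \<le> s * s'" using False s'p assms by (intro mult_mono) auto
      then have "c * c * (s' - s) \<le> (s * s') * (s' - s)"
        using assms by (intro mult_right_mono) auto
      then have "c * (s' - s) * c \<le> (s' - s) * (s * s')"
        by (simp add: algebra_simps)
      then show ?thesis using False s'p assms by (simp add: divide_simps)
    qed
    finally show ?thesis using False s'p by (simp add: gfun_def)
  qed
qed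

lemma g_prod: assumes "c > 0" shows "c * (gfun c x - gfun c y)^2 \<le> (gfun c x - gfun c y) * (x - y)"
proof -
  have key: "c * (gfun c b - gfun c a)^2 \<le> (gfun c b - gfun c a) * (b - a)" if "a \<le> b" for a b
  proof -
    let ?d = "gfun c b - gfun c a"
    have d0: "0 \<le> ?d" using g_mono[OF assms that] by simp
    have "?d \<le> (b - a) / c" using g_lip[OF assms that] .
    then have "c * ?d \<le> b - a" using assms by (simp add: field_simps)
    then have "?d * (c * ?d) \<le> ?d * (b - a)" using d0 by (rule mult_left_mono)
    then show ?thesis by (simp add: power2_eq_square algebra_simps)
  qed
  show ?thesis
  proof (cases "y \<le> x")
    case True then show ?thesis using key[OF True] by simp
  next
    case False then have "x \<le> y" by simp
    from key[OF this] show ?thesis by (simp add: power2_commute algebra_simps)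
  qed
qed

lemma G_deriv: assumes c: "c > 0" shows "(Gfun c has_real_derivative gfun c s) (at s)"
proof -
  define h where "h = (\<lambda>s. s - c - c * ln (s / c))"
  have hd: "(h has_real_derivative (1 - c / s)) (at s)" if "s > 0" for s
  proof -
    have "(h has_real_derivative (1 - c * ((1 / c) / (s / c)))) (at s)"
      unfolding h_def using that c by (auto intro!: derivative_eq_intros)
    then show ?thesis using that c by (simp add: field_simps)
  qed
  consider "s < c" | "s > c" | "s = c" by linarith
  then show ?thesis
  proof cases
    case 1
    have d0: "((\<lambda>_. 0) has_real_derivative 0) (at s)" by simp
    have "gfun c s = 0" using 1 by (simp add: gfun_def)
    moreover have "(Gfun c has_real_derivative 0) (at s)"
      by (rule has_field_derivative_transform_within_open[OF d0, of "{..<c}"])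
         (use 1 in \<open>auto simp: Gfun_def gfun_def\<close>)
    ultimately show ?thesis by simp
  next
    case 2
    have d1: "(h has_real_derivative (1 - c / s)) (at s)" using hd 2 c by simp
    have "gfun c s = 1 - c / s" using 2 by (simp add: gfun_def)
    moreover have "(Gfun c has_real_derivative (1 - c / s)) (at s)"
      by (rule has_field_derivative_transform_within_open[OF d1, of "{c<..}"])
         (use 2 in \<open>auto simp: Gfun_def gfun_def h_def\<close>)
    ultimately show ?thesis by simp
  next
    case 3
    have "((\<lambda>y. (Gfun c y - Gfun c c) / (y - c)) \<longlongrightarrow> 0) (at c)"
    proof (rule filterlim_split_at)
      have "((\<lambda>y. 0::real) \<longlongrightarrow> 0) (at_left c)" by simp
      moreover have "eventually (\<lambda>y. 0 = (Gfun c y - Gfun c c) / (y - c)) (at_left c)"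
        using eventually_at_left_real[of "c - 1" c, OF _] by (auto elim!: eventually_mono simp: Gfun_def)
      ultimately show "((\<lambda>y. (Gfun c y - Gfun c c) / (y - c)) \<longlongrightarrow> 0) (at_left c)"
        by (rule Lim_transform_eventually)
    next
      have "(h has_real_derivative (1 - c / c)) (at c within {c<..})"
        using hd[of c] c by (auto intro: has_field_derivative_at_within)
      then have "((\<lambda>y. (h y - h c) / (y - c)) \<longlongrightarrow> 0) (at_right c)"
        using c unfolding has_field_derivative_iff by simp
      moreover have "eventually (\<lambda>y. (h y - h c) / (y - c) = (Gfun c y - Gfun c c) / (y - c)) (at_right c)"
        using eventually_at_right_less[of c] by eventually_elim (auto simp: Gfun_def h_def)
      ultimately show "((\<lambda>y. (Gfun c y - Gfun c c) / (y - c)) \<longlongrightarrow> 0) (at_right c)"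
        by (rule Lim_transform_eventually)
    qed
    then show ?thesis using 3 unfolding has_field_derivative_iff by (simp add: gfun_def)
  qed
qed

lemma G_convex: assumes c: "c > 0" shows "Gfun c x + gfun c x * (y - x) \<le> Gfun c y"
proof -
  consider "x < y" | "y < x" | "x = y" by linarith
  then show ?thesis
  proof cases
    case 1
    obtain z where z: "x < z" "z < y" "Gfun c y - Gfun c x = (y - x) * gfun c z"
      using MVT2[OF 1, of "Gfun c" "gfun c"] G_deriv[OF c] by blast
    have "gfun c x \<le> gfun c z" using g_mono[OF c] z by simp
    then have "gfun c x * (y - x) \<le> gfun c z * (y - x)" using 1 by (intro mult_right_mono) auto
    then show ?thesis using z by (simp add: algebra_simps)
  next
    case 2
    obtain z where z: "y < z" "z < x" "Gfun c x - Gfun c y = (x - y) * gfun c z"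
      using MVT2[OF 2, of "Gfun c" "gfun c"] G_deriv[OF c] by blast
    have "gfun c z \<le> gfun c x" using g_mono[OF c] z by simp
    then have "gfun c z * (x - y) \<le> gfun c x * (x - y)" using 2 by (intro mult_right_mono) auto
    then show ?thesis using z by (simp add: algebra_simps)
  qed simp
qed

lemma beta_G: assumes c: "c > 0" and s: "s \<ge> 0" shows "beta c s = Gfun c s"
proof -
  have "(gfun c has_integral (Gfun c s - Gfun c 0)) {0..s}"
    by (rule fundamental_theorem_of_calculus[OF s])
       (auto intro!: has_field_derivative_at_within G_deriv[OF c]
             simp: has_real_derivative_iff_has_vector_derivative[symmetric])
  moreover have "Gfun c 0 = 0" using c by (simp add: Gfun_def)
  moreover have "gfun c = (\<lambda>\<sigma>. if \<sigma> \<le> c then 0 else 1 - c / \<sigma>)" by (simp add: fun_eq_iff gfun_def)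
  ultimately show ?thesis unfolding beta_def by (metis diff_zero integral_unique)
qed


lemma Ssum_pos: "(\<Sum>k\<in>(UNIV::'s::finite set). exp (a k :: real)) > 0"
  by (rule sum_pos) auto

lemma logit_pos: "logit eps kap mu j > 0"
  unfolding logit_def using Ssum_pos by (intro divide_pos_pos) auto

lemma logit_sum: "(\<Sum>j\<in>UNIV. logit eps kap mu j) = 1"
proof -
  let ?S = "\<Sum>k\<in>UNIV. exp (- (kap k + mu k) / eps)"
  have "?S > 0" using Ssum_pos .
  then show ?thesis unfolding logit_def by (simp add: sum_divide_distrib[symmetric])
qed

lemma logit_le1: "logit eps kap mu j \<le> 1"
proof -
  have "logit eps kap mu j \<le> (\<Sum>j\<in>UNIV. logit eps kap mu j)"
    by (rule member_le_sum) (auto intro: less_imp_le logit_pos)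
  then show ?thesis using logit_sum[of eps kap mu] by linarith
qed

lemma ln_logit: assumes "eps > 0"
  shows "eps * ln (logit eps kap mu j) = softmin eps kap mu - kap j - mu j"
proof -
  let ?S = "\<Sum>k\<in>UNIV. exp (- (kap k + mu k) / eps)"
  have "?S > 0" using Ssum_pos .
  then have "ln (logit eps kap mu j) = - (kap j + mu j) / eps - ln ?S"
    unfolding logit_def by (simp add: ln_div)
  then show ?thesis using assms unfolding softmin_def by (simp add: field_simps)
qed

lemma softmin_grad: assumes eps: "eps > 0"
  shows "softmin eps kap mu' \<le> softmin eps kap mu + (\<Sum>j\<in>UNIV. logit eps kap mu j * (mu' j - mu j))"
proof -
  define a where "a = (\<lambda>k. - (kap k + mu k) / eps)"
  define a' where "a' = (\<lambda>k. - (kap k + mu' k) / eps)"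
  define S where "S = (\<Sum>k\<in>UNIV. exp (a k))"
  define S' where "S' = (\<Sum>k\<in>UNIV. exp (a' k))"
  define m where "m = (\<Sum>k\<in>UNIV. exp (a k) / S * (a' k - a k))"
  have Sp: "S > 0" unfolding S_def by (rule Ssum_pos)
  have S'p: "S' > 0" unfolding S'_def by (rule Ssum_pos)
  have pt: "exp (a k) * exp m * (1 + (a' k - a k) - m) \<le> exp (a' k)" for k
  proof -
    have "exp m * (1 + (a' k - a k - m)) \<le> exp m * exp (a' k - a k - m)"
      by (intro mult_left_mono exp_ge_add_one_self) auto
    also have "\<dots> = exp (a' k - a k)" by (simp add: exp_diff)
    finally have "exp m * (1 + (a' k - a k) - m) \<le> exp (a' k - a k)" by (simp add: algebra_simps)
    then have "exp (a k) * (exp m * (1 + (a' k - a k) - m)) \<le> exp (a k) * exp (a' k - a k)"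
      by (intro mult_left_mono) auto
    then show ?thesis by (simp add: exp_diff mult.assoc)
  qed
  have "(\<Sum>k\<in>UNIV. exp (a k) * exp m * (1 + (a' k - a k) - m)) \<le> S'"
    unfolding S'_def by (rule sum_mono) (rule pt)
  moreover have "(\<Sum>k\<in>UNIV. exp (a k) * exp m * (1 + (a' k - a k) - m))
      = exp m * (S + (\<Sum>k\<in>UNIV. exp (a k) * (a' k - a k)) - m * S)"
    unfolding S_def by (simp add: algebra_simps sum.distrib sum_distrib_left sum_subtractf sum_distrib_right)
  moreover have "(\<Sum>k\<in>UNIV. exp (a k) * (a' k - a k)) = m * S"
    unfolding m_def using Sp by (simp add: sum_distrib_right)
  ultimately have "exp m * S \<le> S'" by simp
  then have "ln (exp m * S) \<le> ln S'" using Sp S'p by simp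
  then have L: "m + ln S \<le> ln S'" using Sp by (simp add: ln_mult)
  have d: "a' k - a k = - (mu' k - mu k) / eps" for k
    unfolding a_def a'_def using eps by (simp add: field_simps)
  have lg: "exp (a k) / S = logit eps kap mu k" for k
    unfolding logit_def a_def S_def by simp
  have "m = (\<Sum>k\<in>UNIV. logit eps kap mu k * (- (mu' k - mu k) / eps))"
    unfolding m_def d lg ..
  also have "\<dots> = - (\<Sum>j\<in>UNIV. logit eps kap mu j * (mu' j - mu j)) / eps"
  proof -
    have "(\<Sum>k\<in>UNIV. logit eps kap mu k * (- (mu' k - mu k) / eps))
        = (\<Sum>k\<in>UNIV. - (logit eps kap mu k * (mu' k - mu k)) / eps)"
      by (rule sum.cong) (use eps in \<open>auto simp: field_simps\<close>)
    also have "\<dots> = - (\<Sum>k\<in>UNIV. logit eps kap mu k * (mu' k - mu k)) / eps"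
      by (simp add: sum_divide_distrib[symmetric] sum_negf)
    finally show ?thesis .
  qed
  finally have mm: "m = - (\<Sum>j\<in>UNIV. logit eps kap mu j * (mu' j - mu j)) / eps" .
  have "softmin eps kap mu' = - eps * ln S'" unfolding softmin_def S'_def a'_def by simp
  also have "\<dots> \<le> - eps * (m + ln S)" using L eps by simp
  also have "\<dots> = softmin eps kap mu + (\<Sum>j\<in>UNIV. logit eps kap mu j * (mu' j - mu j))"
    unfolding mm softmin_def S_def a_def using eps by (simp add: field_simps)
  finally show ?thesis .
qed


locale model =
  fixes T eps :: real
    and c :: "'s::finite \<Rightarrow> real"
    and kap :: "'l::finite \<Rightarrow> 's \<Rightarrow> real"
    and rbar :: "'l \<Rightarrow> real"
    and p :: "'l \<Rightarrow> real \<Rightarrow> real"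
    and f :: "'l \<Rightarrow> real \<Rightarrow> real"
    and U :: "'l \<Rightarrow> real \<Rightarrow> real"
  assumes T_pos: "T > 0" and eps_pos: "eps > 0"
    and c_pos: "\<And>j. c j > 0"
    and rbar_pos: "\<And>i. rbar i > 0"
    and f_nonneg: "\<And>i x. f i x \<ge> 0"
    and f_support: "\<And>i x. x < 0 \<Longrightarrow> f i x = 0"
    and f_prob: "\<And>i. (f i has_integral 1) {0..}"
    and p_ccdf: "\<And>i \<tau>. p i \<tau> = integral {\<tau><..} (f i)"
    and U_mono: "\<And>i. mono_on {0..} (U i)"
    and U_strict: "\<And>i. strictly_concave_on {0..rbar i} (U i)"
    and U_argmax: "\<And>i \<tau> r. \<tau> \<ge> 0 \<Longrightarrow> r \<ge> 0 \<Longrightarrow>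
        U i r - \<tau> * r \<le> U i (rbar i * p i \<tau>) - \<tau> * (rbar i * p i \<tau>)"
begin

definition muof :: "('s \<Rightarrow> real) \<Rightarrow> 's \<Rightarrow> real" where
  "muof q = (\<lambda>k. delay T (c k) (q k))"
definition rr :: "'l \<Rightarrow> ('s \<Rightarrow> real) \<Rightarrow> real" where
  "rr i mu = rbar i * p i (softmin eps (kap i) mu)"
definition Fm :: "'s \<Rightarrow> ('s \<Rightarrow> real) \<Rightarrow> real" where
  "Fm j mu = (\<Sum>i\<in>UNIV. rr i mu * logit eps (kap i) mu j)"
definition Rtot :: real where "Rtot = (\<Sum>i\<in>UNIV. rbar i)"

lemma p_fun: "p i = (\<lambda>\<tau>. integral {\<tau><..} (f i))"
  using p_ccdf by (simp add: fun_eq_iff)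

lemma p_ge0: "p i t \<ge> 0" and p_le1: "p i t \<le> 1"
  and p_anti: "t \<le> t' \<Longrightarrow> p i t' \<le> p i t"
  and p_neg: "t < 0 \<Longrightarrow> p i t = 1" and p_cont: "isCont (p i) t"
proof -
  have A: "\<And>x. f i x \<ge> 0" "\<And>x. x < 0 \<Longrightarrow> f i x = 0" "(f i has_integral 1) {0..}"
    using f_nonneg f_support f_prob by auto
  note B = ccdf_props[of "f i", OF A(1) A(2) A(3)]
  show "p i t \<ge> 0" "p i t \<le> 1" "t \<le> t' \<Longrightarrow> p i t' \<le> p i t"
    "t < 0 \<Longrightarrow> p i t = 1" "isCont (p i) t"
    unfolding p_fun using B by auto
qed

lemma rr_ge0: "rr i mu \<ge> 0"
  unfolding rr_def using p_ge0 rbar_pos[of i] by simp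

lemma rr_le: "rr i mu \<le> rbar i"
proof -
  have "rbar i * p i (softmin eps (kap i) mu) \<le> rbar i * 1"
    using p_le1 rbar_pos[of i] by (intro mult_left_mono) auto
  then show ?thesis unfolding rr_def by simp
qed

lemma Rtot_ge0: "Rtot \<ge> 0"
  unfolding Rtot_def using rbar_pos by (intro sum_nonneg) (auto intro: less_imp_le)

lemma Fm_ge0: "Fm j mu \<ge> 0"
  unfolding Fm_def using rr_ge0 logit_pos[THEN less_imp_le] by (intro sum_nonneg mult_nonneg_nonneg) auto

lemma Fm_le: "Fm j mu \<le> Rtot"
  unfolding Fm_def Rtot_def
proof (rule sum_mono)
  fix i
  have "rr i mu * logit eps (kap i) mu j \<le> rr i mu * 1"
    using rr_ge0 logit_le1 by (intro mult_left_mono) auto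
  then show "rr i mu * logit eps (kap i) mu j \<le> rbar i" using rr_le[of i mu] by simp
qed

lemma softmin_tendsto:
  assumes "\<And>k. ((\<lambda>t. mu t k) \<longlongrightarrow> m k) F"
  shows "((\<lambda>t. softmin eps ka (mu t)) \<longlongrightarrow> softmin eps ka m) F"
  unfolding softmin_def using assms Ssum_pos[of "\<lambda>k. (- ka k - m k) / eps"] eps_pos
  by (intro tendsto_intros) auto

lemma logit_tendsto:
  assumes "\<And>k. ((\<lambda>t. mu t k) \<longlongrightarrow> m k) F"
  shows "((\<lambda>t. logit eps ka (mu t) j) \<longlongrightarrow> logit eps ka m j) F"
  unfolding logit_def using assms Ssum_pos[of "\<lambda>k. (- ka k - m k) / eps"] eps_pos
  by (intro tendsto_intros) auto

lemma rr_tendsto: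
  assumes "\<And>k. ((\<lambda>t. mu t k) \<longlongrightarrow> m k) F"
  shows "((\<lambda>t. rr i (mu t)) \<longlongrightarrow> rr i m) F"
  unfolding rr_def
  by (intro tendsto_intros isCont_tendsto_compose[OF p_cont] softmin_tendsto assms)

lemma Fm_tendsto:
  assumes "\<And>k. ((\<lambda>t. mu t k) \<longlongrightarrow> m k) F"
  shows "((\<lambda>t. Fm j (mu t)) \<longlongrightarrow> Fm j m) F"
  unfolding Fm_def
  by (intro tendsto_intros rr_tendsto logit_tendsto assms)

lemma delay_tendsto:
  assumes "(g \<longlongrightarrow> l) F"
  shows "((\<lambda>t. delay T (c k) (g t)) \<longlongrightarrow> delay T (c k) l) F"
  unfolding delay_g using assms
  by (intro tendsto_intros isCont_tendsto_compose[OF g_cont[OF c_pos]])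

lemma equilibrium_exists: "\<exists>qs. \<forall>j. qs j = T * Fm j (muof qs)"
proof -
  define Phi :: "real^'s \<Rightarrow> real^'s" where
    "Phi = (\<lambda>v. \<chi> j. T * Fm j (muof (\<lambda>k. v $ k)))"
  define S :: "(real^'s) set" where "S = cbox 0 (\<chi> j. T * Rtot)"
  have "compact S" "convex S" unfolding S_def by (auto simp: compact_cbox convex_box)
  moreover have "(0::real^'s) \<in> S" unfolding S_def using T_pos Rtot_ge0
    by (auto simp: mem_box_cart)
  then have "S \<noteq> {}" by blast
  moreover have "continuous_on S Phi"
  proof -
    have "isCont (\<lambda>v. T * Fm j (muof (\<lambda>k. v $ k))) v0" for j and v0 :: "real^'s"
      unfolding isCont_def muof_def
      by (intro tendsto_intros Fm_tendsto delay_tendsto tendsto_vec_nth tendsto_ident_at)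
    then show ?thesis unfolding Phi_def
      by (intro continuous_on_vec_lambda continuous_at_imp_continuous_on) auto
  qed
  moreover have "Phi \<in> S \<rightarrow> S"
    unfolding Phi_def S_def using T_pos Fm_ge0 Fm_le
    by (auto simp: mem_box_cart intro!: mult_left_mono)
  ultimately obtain v where "v \<in> S" "Phi v = v" using brouwer[of S Phi] by blast
  then have "\<forall>j. v $ j = T * Fm j (muof (\<lambda>k. v $ k))" unfolding Phi_def
    by (metis vec_lambda_beta)
  then show ?thesis by blast
qed

end


lemma ln_strict: "0 < (y::real) \<Longrightarrow> y \<noteq> 1 \<Longrightarrow> ln y < y - 1"
  using ln_diff_less[of y 1] by simp

lemma xlog_excess:
  fixes r d x' :: real
  assumes r: "r > 0" and d: "d > 0" and x': "x' \<ge> 0"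
  defines "E \<equiv> xlogx_rel x' r - xlogx_rel (r * d) r - (ln d + 1) * (x' - r * d)"
  shows "E \<ge> 0" and "E = 0 \<Longrightarrow> x' = r * d"
proof -
  have x0: "r * d > 0" using r d by simp
  have xl: "xlogx_rel (r * d) r = r * d * ln d" using x0 r by (simp add: xlogx_rel_def)
  have main: "E \<ge> 0 \<and> (E = 0 \<longrightarrow> x' = r * d)"
  proof (cases "x' = 0")
    case True
    then have "E = r * d" unfolding E_def xl by (simp add: xlogx_rel_def algebra_simps)
    then show ?thesis using x0 True by simp
  next
    case False
    then have xp: "x' > 0" using x' by simp
    define y where "y = r * d / x'"
    have yp: "y > 0" unfolding y_def using x0 xp by simp
    have l1: "ln (x' / r) = ln x' - ln r" using xp r by (simp add: ln_div)
    have l2: "ln y = ln r + ln d - ln x'" unfolding y_def using xp r d by (simp add: ln_div ln_mult)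
    have l3: "ln (x' / r) = ln d - ln y" using l1 l2 by simp
    have l4: "x' * y = r * d" unfolding y_def using xp by simp
    have "E = x' * ln (x' / r) - r * d * ln d - (ln d + 1) * (x' - r * d)"
      unfolding E_def xl using False by (simp add: xlogx_rel_def)
    also have "\<dots> = x' * (ln d - ln y) - r * d * ln d - (ln d + 1) * (x' - r * d)"
      unfolding l3 ..
    also have "\<dots> = r * d - x' - x' * ln y" by (simp add: algebra_simps)
    also have "\<dots> = x' * (y - 1 - ln y)" using l4 by (simp add: algebra_simps)
    finally have "E = x' * (y - 1 - ln y)" .
    moreover have "y - 1 - ln y \<ge> 0" using ln_le_minus_one[OF yp] by simp
    moreover have "y \<noteq> 1 \<Longrightarrow> y - 1 - ln y > 0" using ln_strict[OF yp] by simp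
    ultimately have "E \<ge> 0" "E = 0 \<Longrightarrow> y = 1" using xp
      by (auto simp: mult_pos_pos mult_nonneg_nonneg)
    moreover have "y = 1 \<Longrightarrow> x' = r * d" using l4 by simp
    ultimately show ?thesis by blast
  qed
  then show "E \<ge> 0" and "E = 0 \<Longrightarrow> x' = r * d" by auto
qed

context model begin

lemma kkt_term:
  fixes qj m :: real and j :: 's
  assumes hfix: "qj = T * F" and m: "0 \<le> m" "m < T"
  defines "mj \<equiv> delay T (c j) qj"
  shows "(m - mj) * F + c j * (ln (1 - m / T) - ln (1 - mj / T)) \<le> 0"
    and "m \<noteq> mj \<Longrightarrow> (m - mj) * F + c j * (ln (1 - m / T) - ln (1 - mj / T)) < 0"
proof -
  have cj: "c j > 0" using c_pos .
  have mj: "0 \<le> mj" "mj < T" unfolding mj_def delay_g using g_range[OF cj, of qj] T_pos by auto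
  define d where "d = T - mj"
  define d' where "d' = T - m"
  have dp: "d > 0" "d' > 0" using mj m unfolding d_def d'_def by auto
  have lnq: "ln (1 - m / T) - ln (1 - mj / T) = ln d' - ln d"
  proof -
    have "1 - m / T = d' / T" "1 - mj / T = d / T" unfolding d_def d'_def using T_pos by (auto simp: field_simps)
    then show ?thesis using dp T_pos by (simp add: ln_div)
  qed
  have base: "(m - mj) * F + c j * ((d' - d) / d) \<le> 0"
  proof (cases "qj \<le> c j")
    case True
    then have "mj = 0" unfolding mj_def delay_def by simp
    then have "d = T" unfolding d_def by simp
    have "F \<le> c j / T" using True hfix T_pos by (simp add: field_simps)
    then have "m * F \<le> m * (c j / T)" using m by (intro mult_left_mono) auto
    then show ?thesis using \<open>mj = 0\<close> \<open>d = T\<close> T_pos unfolding d'_def by (simp add: field_simps)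
  next
    case False
    then have qp: "qj > 0" using cj by simp
    have "mj = T * (1 - c j / qj)" unfolding mj_def delay_def using False by simp
    then have "d = T * c j / qj" unfolding d_def using qp by (simp add: field_simps)
    then have cd: "c j / d = F" using hfix qp cj T_pos by (simp add: field_simps)
    have "c j * ((d' - d) / d) = (c j / d) * (d' - d)" by simp
    also have "\<dots> = F * (d' - d)" using cd by simp
    also have "\<dots> = F * (mj - m)" unfolding d_def d'_def by simp
    finally show ?thesis by (simp add: algebra_simps)
  qed
  have "ln d' - ln d \<le> (d' - d) / d" using ln_diff_le[OF dp(2) dp(1)] .
  then have "c j * (ln d' - ln d) \<le> c j * ((d' - d) / d)" using cj by (intro mult_left_mono) auto
  then show "(m - mj) * F + c j * (ln (1 - m / T) - ln (1 - mj / T)) \<le> 0" using base lnq by simp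
  assume "m \<noteq> mj"
  then have "d' \<noteq> d" unfolding d_def d'_def by simp
  then have "ln d' - ln d < (d' - d) / d" using ln_diff_less[OF dp(2) dp(1)] by simp
  then have "c j * (ln d' - ln d) < c j * ((d' - d) / d)" using cj by (intro mult_strict_left_mono) auto
  then show "(m - mj) * F + c j * (ln (1 - m / T) - ln (1 - mj / T)) < 0" using base lnq by simp
qed

end


locale equil = model T eps c kap rbar p f U
  for T eps :: real
    and c :: "'s::finite \<Rightarrow> real"
    and kap :: "'l::finite \<Rightarrow> 's \<Rightarrow> real"
    and rbar :: "'l \<Rightarrow> real"
    and p :: "'l \<Rightarrow> real \<Rightarrow> real"
    and f :: "'l \<Rightarrow> real \<Rightarrow> real"
    and U :: "'l \<Rightarrow> real \<Rightarrow> real" +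
  fixes qs :: "'s \<Rightarrow> real"
  assumes qs_fix: "\<And>j. qs j = T * Fm j (muof qs)"
begin

definition mus :: "'s \<Rightarrow> real" where "mus = muof qs"
definition rs :: "'l \<Rightarrow> real" where "rs i = rr i mus"
definition Xs :: "'l \<Rightarrow> 's \<Rightarrow> real" where "Xs i j = rs i * logit eps (kap i) mus j"

lemma mus_j: "mus j = delay T (c j) (qs j)" unfolding mus_def muof_def by simp

lemma mus_range: "0 \<le> mus j" "mus j < T"
  unfolding mus_j delay_g using g_range[OF c_pos, of j "qs j"] T_pos by auto

lemma rs_range: "0 \<le> rs i" "rs i \<le> rbar i"
  unfolding rs_def using rr_ge0 rr_le by auto

lemma Fm_mus: "Fm j mus = qs j / T"
  using qs_fix[of j] T_pos unfolding mus_def by simp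

lemma qs_ge0: "qs j \<ge> 0"
  using qs_fix[of j] T_pos Fm_ge0 by simp

lemma W_mu:
  assumes mu': "\<And>j. 0 \<le> mu' j \<and> mu' j < T"
  shows "Wfun T eps kap c U rs mu' \<le> Wfun T eps kap c U rs mus"
    and "mu' \<noteq> mus \<Longrightarrow> Wfun T eps kap c U rs mu' < Wfun T eps kap c U rs mus"
proof -
  define a where "a = (\<lambda>j. (mu' j - mus j) * Fm j mus + c j * (ln (1 - mu' j / T) - ln (1 - mus j / T)))"
  have A: "(\<Sum>i\<in>UNIV. rs i * softmin eps (kap i) mu') \<le>
      (\<Sum>i\<in>UNIV. rs i * softmin eps (kap i) mus) + (\<Sum>j\<in>UNIV. (mu' j - mus j) * Fm j mus)"
  proof -
    have "(\<Sum>i\<in>UNIV. rs i * softmin eps (kap i) mu') \<le>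
        (\<Sum>i\<in>UNIV. rs i * (softmin eps (kap i) mus + (\<Sum>j\<in>UNIV. logit eps (kap i) mus j * (mu' j - mus j))))"
      by (rule sum_mono, rule mult_left_mono[OF softmin_grad[OF eps_pos]]) (use rs_range in auto)
    also have "\<dots> = (\<Sum>i\<in>UNIV. rs i * softmin eps (kap i) mus) +
        (\<Sum>i\<in>UNIV. \<Sum>j\<in>UNIV. rs i * logit eps (kap i) mus j * (mu' j - mus j))"
      by (simp add: algebra_simps sum.distrib sum_distrib_left)
    also have "(\<Sum>i\<in>UNIV. \<Sum>j\<in>UNIV. rs i * logit eps (kap i) mus j * (mu' j - mus j))
        = (\<Sum>j\<in>UNIV. (mu' j - mus j) * Fm j mus)"
      unfolding Fm_def rs_def by (subst sum.swap) (simp add: sum_distrib_left algebra_simps)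
    finally show ?thesis .
  qed
  have aj: "a j \<le> 0" "mu' j \<noteq> mus j \<Longrightarrow> a j < 0" for j
  proof -
    have q: "qs j = T * Fm j mus" using qs_fix[of j] unfolding mus_def .
    note k = kkt_term[of "qs j" "Fm j mus" "mu' j" j, OF q] 
    show "a j \<le> 0" "mu' j \<noteq> mus j \<Longrightarrow> a j < 0"
      unfolding a_def using k mu'[of j] unfolding mus_j[symmetric] by auto
  qed
  have diff: "Wfun T eps kap c U rs mu' - Wfun T eps kap c U rs mus
      = (\<Sum>i\<in>UNIV. rs i * softmin eps (kap i) mu') - (\<Sum>i\<in>UNIV. rs i * softmin eps (kap i) mus)
        + (\<Sum>j\<in>UNIV. c j * (ln (1 - mu' j / T) - ln (1 - mus j / T)))"
    unfolding Wfun_def by (simp add: sum_subtractf algebra_simps)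
  have sa: "(\<Sum>j\<in>UNIV. a j) = (\<Sum>j\<in>UNIV. (mu' j - mus j) * Fm j mus)
        + (\<Sum>j\<in>UNIV. c j * (ln (1 - mu' j / T) - ln (1 - mus j / T)))"
    unfolding a_def by (simp add: sum.distrib)
  have "(\<Sum>j\<in>UNIV. a j) \<le> 0" using aj(1) by (intro sum_nonpos) auto
  then show "Wfun T eps kap c U rs mu' \<le> Wfun T eps kap c U rs mus" using A diff sa by linarith
  assume "mu' \<noteq> mus"
  then obtain j0 where "mu' j0 \<noteq> mus j0" by auto
  have "(\<Sum>j\<in>UNIV. a j) < (\<Sum>j\<in>(UNIV::'s set). (0::real))"
  proof (rule sum_strict_mono_ex1[of UNIV a "\<lambda>_. 0"])
    show "\<exists>x\<in>UNIV. a x < 0" using aj(2) \<open>mu' j0 \<noteq> mus j0\<close> by blast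
  qed (use aj(1) in auto)
  then show "Wfun T eps kap c U rs mu' < Wfun T eps kap c U rs mus" using A diff sa by simp
qed

end


context equil begin

definition hfun :: "'l \<Rightarrow> real \<Rightarrow> real" where
  "hfun i r = r * softmin eps (kap i) mus - U i r"

lemma h_min: assumes r: "0 \<le> r" "r \<le> rbar i" shows "hfun i (rs i) \<le> hfun i r"
proof -
  let ?phi = "softmin eps (kap i) mus"
  have rsd: "rs i = rbar i * p i ?phi" unfolding rs_def rr_def ..
  show ?thesis
  proof (cases "?phi \<ge> 0")
    case True
    show ?thesis using U_argmax[OF True r(1), of i] unfolding hfun_def rsd by (simp add: algebra_simps)
  next
    case False
    then have "p i ?phi = 1" using p_neg by simp
    then have rs1: "rs i = rbar i" unfolding rsd by simp
    have "U i r \<le> U i (rbar i)" using U_mono[of i] r by (auto intro: mono_onD)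
    moreover have "rbar i * ?phi \<le> r * ?phi" using False r by (intro mult_right_mono_neg) auto
    ultimately show ?thesis unfolding hfun_def rs1 by simp
  qed
qed

lemma h_unique: assumes r: "0 \<le> r" "r \<le> rbar i" and le: "hfun i r \<le> hfun i (rs i)"
  shows "r = rs i"
proof (rule ccontr)
  assume ne: "r \<noteq> rs i"
  define m where "m = (1/2) * r + (1 - 1/2) * rs i"
  have m: "0 \<le> m" "m \<le> rbar i" unfolding m_def using r rs_range[of i] by auto
  have sc: "U i m > (1/2) * U i r + (1 - 1/2) * U i (rs i)"
  proof -
    have "\<forall>x\<in>{0..rbar i}. \<forall>y\<in>{0..rbar i}. x \<noteq> y \<longrightarrow> (\<forall>u. 0 < u \<and> u < 1 \<longrightarrow>
        U i (u * x + (1 - u) * y) > u * U i x + (1 - u) * U i y)"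
      using U_strict[of i] unfolding strictly_concave_on_def by blast
    moreover have "r \<in> {0..rbar i}" "rs i \<in> {0..rbar i}" using r rs_range[of i] by auto
    ultimately have "U i ((1/2) * r + (1 - 1/2) * rs i) > (1/2) * U i r + (1 - 1/2) * U i (rs i)"
      using ne by (metis (no_types, lifting) field_sum_of_halves half_gt_zero less_add_same_cancel1 zero_less_one)
    then show ?thesis unfolding m_def .
  qed
  have "hfun i m < (1/2) * hfun i r + (1/2) * hfun i (rs i)"
    using sc unfolding hfun_def m_def by (simp add: algebra_simps)
  also have "\<dots> \<le> hfun i (rs i)" using le by simp
  finally show False using h_min[OF m] by simp
qed

lemma W_h: "Wfun T eps kap c U r mus = (\<Sum>i\<in>UNIV. hfun i (r i)) + (\<Sum>j\<in>UNIV. c j * ln (1 - mus j / T))"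
  unfolding Wfun_def hfun_def ..

lemma W_r:
  assumes r': "\<And>i. 0 \<le> r' i \<and> r' i \<le> rbar i"
  shows "Wfun T eps kap c U rs mus \<le> Wfun T eps kap c U r' mus"
    and "Wfun T eps kap c U r' mus \<le> Wfun T eps kap c U rs mus \<Longrightarrow> r' = rs"
proof -
  have hm: "hfun i (rs i) \<le> hfun i (r' i)" for i using h_min r'[of i] by auto
  then have "(\<Sum>i\<in>UNIV. hfun i (rs i)) \<le> (\<Sum>i\<in>UNIV. hfun i (r' i))" by (rule sum_mono)
  then show "Wfun T eps kap c U rs mus \<le> Wfun T eps kap c U r' mus" unfolding W_h by simp
  assume "Wfun T eps kap c U r' mus \<le> Wfun T eps kap c U rs mus"
  then have "(\<Sum>i\<in>UNIV. hfun i (r' i) - hfun i (rs i)) \<le> 0" unfolding W_h by (simp add: sum_subtractf)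
  moreover have "\<forall>i\<in>UNIV. 0 \<le> hfun i (r' i) - hfun i (rs i)" using hm by auto
  ultimately have "\<forall>i\<in>UNIV. hfun i (r' i) - hfun i (rs i) = 0"
    using sum_nonneg_eq_0_iff[of UNIV "\<lambda>i. hfun i (r' i) - hfun i (rs i)"]
    by (metis (no_types, lifting) antisym finite sum_nonneg)
  then show "r' = rs" using h_unique r' by (auto simp: fun_eq_iff)
qed

lemma saddle_rs: "saddle_point T eps kap c U rbar rs mus"
  unfolding saddle_point_def using rs_range mus_range W_mu(1) W_r(1) by auto

lemma saddle_unique:
  assumes "saddle_point T eps kap c U rbar r' mu'"
  shows "r' = rs \<and> mu' = mus"
proof -
  have r': "\<And>i. 0 \<le> r' i \<and> r' i \<le> rbar i" and mu': "\<And>j. 0 \<le> mu' j \<and> mu' j < T"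
    and sp: "\<And>r'' mu''. (\<forall>i. 0 \<le> r'' i \<and> r'' i \<le> rbar i) \<Longrightarrow> (\<forall>j. 0 \<le> mu'' j \<and> mu'' j < T) \<Longrightarrow>
        Wfun T eps kap c U r' mu'' \<le> Wfun T eps kap c U r' mu' \<and>
        Wfun T eps kap c U r' mu' \<le> Wfun T eps kap c U r'' mu'"
    using assms unfolding saddle_point_def by auto
  have rsb: "\<forall>i. 0 \<le> rs i \<and> rs i \<le> rbar i" using rs_range by auto
  have musb: "\<forall>j. 0 \<le> mus j \<and> mus j < T" using mus_range by auto
  have e1: "Wfun T eps kap c U r' mus \<le> Wfun T eps kap c U r' mu'" using sp[OF rsb musb] by auto
  have e2: "Wfun T eps kap c U r' mu' \<le> Wfun T eps kap c U rs mu'" using sp[OF rsb musb] by auto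
  have e3: "Wfun T eps kap c U rs mu' \<le> Wfun T eps kap c U rs mus" using W_mu(1) mu' by blast
  have e4: "Wfun T eps kap c U rs mus \<le> Wfun T eps kap c U r' mus" using W_r(1) r' by blast
  have "mu' = mus"
  proof (rule ccontr)
    assume "mu' \<noteq> mus"
    then have "Wfun T eps kap c U rs mu' < Wfun T eps kap c U rs mus" using W_mu(2) mu' by blast
    then show False using e1 e2 e4 by linarith
  qed
  moreover have "r' = rs" using W_r(2)[OF r'] e1 e2 e3 by linarith
  ultimately show ?thesis by simp
qed

end


context equil begin

lemma Xs_rowsum: "(\<Sum>j\<in>UNIV. Xs i j) = rs i"
  unfolding Xs_def by (simp add: sum_distrib_left[symmetric] logit_sum)

lemma Xs_colsum: "(\<Sum>i\<in>UNIV. Xs i j) = qs j / T"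
  using Fm_mus[of j] unfolding Fm_def Xs_def rs_def by simp

lemma Xs_ge0: "Xs i j \<ge> 0"
  unfolding Xs_def by (rule mult_nonneg_nonneg[OF rs_range(1) logit_pos[THEN less_imp_le]])

lemma feasible_s: "feasible T rs Xs qs"
  unfolding feasible_def using Xs_ge0 Xs_rowsum Xs_colsum by auto

lemma row_zero:
  fixes X' :: "'l \<Rightarrow> 's \<Rightarrow> real"
  assumes "\<And>j. X' i j \<ge> 0" "(\<Sum>j\<in>UNIV. X' i j) = 0"
  shows "X' i j = 0"
  using assms sum_nonneg_eq_0_iff[of UNIV "X' i"] by auto

lemma obj_opt:
  assumes fe: "feasible T rs X' q'"
  shows "objective eps kap c rs Xs qs \<le> objective eps kap c rs X' q'"
    and "objective eps kap c rs X' q' \<le> objective eps kap c rs Xs qs \<Longrightarrow> X' = Xs \<and> q' = qs"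
proof -
  have X'0: "\<And>i j. X' i j \<ge> 0" and rows: "\<And>i. (\<Sum>j\<in>UNIV. X' i j) = rs i"
    and cols: "\<And>j. (\<Sum>i\<in>UNIV. X' i j) = q' j / T"
    using fe unfolding feasible_def by auto
  have q'0: "q' j \<ge> 0" for j
  proof -
    have "q' j = T * (\<Sum>i\<in>UNIV. X' i j)" using cols[of j] T_pos by simp
    then show ?thesis using X'0 T_pos by (simp add: sum_nonneg)
  qed
  define phi where "phi i = softmin eps (kap i) mus" for i
  define E where "E i j = (if rs i > 0 then xlogx_rel (X' i j) (rs i) - xlogx_rel (Xs i j) (rs i)
      - (ln (logit eps (kap i) mus j) + 1) * (X' i j - Xs i j) else 0)" for i j
  define B where "B j = beta (c j) (q' j) - beta (c j) (qs j) - (mus j / T) * (q' j - qs j)" for j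
  have E0: "E i j \<ge> 0" and E0': "E i j = 0 \<Longrightarrow> X' i j = Xs i j" for i j
  proof -
    have "E i j \<ge> 0 \<and> (E i j = 0 \<longrightarrow> X' i j = Xs i j)"
    proof (cases "rs i > 0")
      case True
      note xe = xlog_excess[OF True logit_pos X'0[of i j]]
      show ?thesis using xe unfolding E_def Xs_def using True by auto
    next
      case False
      then have "rs i = 0" using rs_range[of i] by simp
      then have "X' i j = 0" "Xs i j = 0" using row_zero[of X' i j] X'0 rows[of i] Xs_def by auto
      then show ?thesis unfolding E_def using False by simp
    qed
    then show "E i j \<ge> 0" "E i j = 0 \<Longrightarrow> X' i j = Xs i j" by auto
  qed
  have B0: "B j \<ge> 0" for j
  proof -
    have "Gfun (c j) (qs j) + gfun (c j) (qs j) * (q' j - qs j) \<le> Gfun (c j) (q' j)"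
      by (rule G_convex[OF c_pos])
    moreover have "mus j / T = gfun (c j) (qs j)" unfolding mus_j delay_g using T_pos by simp
    ultimately show ?thesis unfolding B_def beta_G[OF c_pos q'0] beta_G[OF c_pos qs_ge0] by simp
  qed
  have hterm: "kap i j * (X' i j - Xs i j) + eps * (xlogx_rel (X' i j) (rs i) - xlogx_rel (Xs i j) (rs i))
      = eps * E i j + (phi i + eps - mus j) * (X' i j - Xs i j)" for i j
  proof (cases "rs i > 0")
    case True
    have "eps * ln (logit eps (kap i) mus j) = phi i - kap i j - mus j"
      unfolding phi_def by (rule ln_logit[OF eps_pos])
    then have L: "phi i = kap i j + mus j + eps * ln (logit eps (kap i) mus j)" by simp
    show ?thesis unfolding E_def using True by (simp add: L algebra_simps)
  next
    case False
    then have "rs i = 0" using rs_range[of i] by simp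
    then have "X' i j = 0" "Xs i j = 0" using row_zero[of X' i j] X'0 rows[of i] Xs_def by auto
    then show ?thesis unfolding E_def using False by simp
  qed
  have s1: "(\<Sum>i\<in>UNIV. \<Sum>j\<in>UNIV. (phi i + eps) * (X' i j - Xs i j)) = 0"
    by (simp add: sum_distrib_left[symmetric] sum_subtractf rows Xs_rowsum)
  have s2: "(\<Sum>i\<in>UNIV. \<Sum>j\<in>UNIV. mus j * (X' i j - Xs i j)) = (\<Sum>j\<in>UNIV. mus j * (q' j - qs j) / T)"
    by (subst sum.swap) (simp add: sum_distrib_left[symmetric] sum_subtractf cols Xs_colsum diff_divide_distrib[symmetric])
  have "objective eps kap c rs X' q' - objective eps kap c rs Xs qs
      = (\<Sum>i\<in>UNIV. \<Sum>j\<in>UNIV. kap i j * (X' i j - Xs i j) + eps * (xlogx_rel (X' i j) (rs i) - xlogx_rel (Xs i j) (rs i)))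
        + (\<Sum>j\<in>UNIV. beta (c j) (q' j) - beta (c j) (qs j))"
    unfolding objective_def by (simp add: sum_subtractf sum.distrib sum_distrib_left algebra_simps)
  also have "\<dots> = (\<Sum>i\<in>UNIV. \<Sum>j\<in>UNIV. eps * E i j + ((phi i + eps) * (X' i j - Xs i j) - mus j * (X' i j - Xs i j)))
        + (\<Sum>j\<in>UNIV. beta (c j) (q' j) - beta (c j) (qs j))"
    unfolding hterm by (simp add: algebra_simps)
  also have "\<dots> = eps * (\<Sum>i\<in>UNIV. \<Sum>j\<in>UNIV. E i j) + (\<Sum>j\<in>UNIV. B j)"
    using s1 s2 unfolding B_def
    by (simp add: sum.distrib sum_subtractf sum_distrib_left algebra_simps)
  finally have diff: "objective eps kap c rs X' q' - objective eps kap c rs Xs qs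
      = eps * (\<Sum>i\<in>UNIV. \<Sum>j\<in>UNIV. E i j) + (\<Sum>j\<in>UNIV. B j)" .
  have sE: "(\<Sum>i\<in>UNIV. \<Sum>j\<in>UNIV. E i j) \<ge> 0" using E0 by (intro sum_nonneg) auto
  have sB: "(\<Sum>j\<in>UNIV. B j) \<ge> 0" using B0 by (intro sum_nonneg) auto
  have sE': "eps * (\<Sum>i\<in>UNIV. \<Sum>j\<in>UNIV. E i j) \<ge> 0"
    using sE eps_pos by (simp add: mult_nonneg_nonneg)
  show "objective eps kap c rs Xs qs \<le> objective eps kap c rs X' q'"
    using diff sE' sB by linarith
  assume le: "objective eps kap c rs X' q' \<le> objective eps kap c rs Xs qs"
  have "eps * (\<Sum>i\<in>UNIV. \<Sum>j\<in>UNIV. E i j) = 0"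
    using diff sE' sB le by linarith
  then have "(\<Sum>i\<in>UNIV. \<Sum>j\<in>UNIV. E i j) = 0" using eps_pos by simp
  then have "\<forall>i\<in>UNIV. (\<Sum>j\<in>UNIV. E i j) = 0"
    using E0 by (subst sum_nonneg_eq_0_iff[symmetric]) (auto intro: sum_nonneg)
  then have "\<forall>i j. E i j = 0"
  proof (intro allI)
    fix i j
    assume h: "\<forall>i\<in>UNIV. (\<Sum>j\<in>UNIV. E i j) = 0"
    then have "(\<Sum>j\<in>UNIV. E i j) = 0" by simp
    then show "E i j = 0" using E0 sum_nonneg_eq_0_iff[of UNIV "E i"] by auto
  qed
  then have XX: "X' = Xs" using E0' by (auto simp: fun_eq_iff)
  have "q' j = qs j" for j
  proof -
    have "q' j = T * (\<Sum>i\<in>UNIV. X' i j)" using cols[of j] T_pos by simp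
    also have "\<dots> = qs j" unfolding XX Xs_colsum using T_pos by simp
    finally show ?thesis .
  qed
  then show "X' = Xs \<and> q' = qs" using XX by auto
qed

end


lemma deriv_at_interior:
  fixes h :: "real \<Rightarrow> real"
  assumes "(h has_real_derivative D) (at t within {a..})" "a < t"
  shows "(h has_real_derivative D) (at t)"
proof -
  have "t \<in> interior {a..}" using assms(2) interior_Ici[of "a - 1" a] by auto
  then show ?thesis using assms(1) at_within_interior by metis
qed

lemma deriv_le_bound:
  fixes h h' :: "real \<Rightarrow> real"
  assumes d: "\<And>t. t \<ge> a \<Longrightarrow> (h has_real_derivative h' t) (at t within {a..})"
    and su: "a \<le> s" "s \<le> u" and K: "\<And>t. s < t \<Longrightarrow> t < u \<Longrightarrow> h' t \<le> K"
  shows "h u - h s \<le> K * (u - s)"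
proof (cases "s = u")
  case True then show ?thesis by simp
next
  case False
  then have lt: "s < u" using su by simp
  have co: "continuous_on {a..} h" by (rule DERIV_continuous_on[of _ _ h']) (use d in auto)
  have co2: "continuous_on {s..u} h" by (rule continuous_on_subset[OF co]) (use su in auto)
  have dd: "(h has_real_derivative h' t) (at t)" if "s < t" for t
    using deriv_at_interior[OF d] that su by auto
  obtain l z where z: "s < z" "z < u" "DERIV h z :> l" "h u - h s = (u - s) * l"
    using MVT[OF lt co2] dd real_differentiable_def by (metis)
  have "l = h' z" using DERIV_unique[OF z(3) dd[OF z(1)]] .
  then have "l \<le> K" using K z by simp
  then show ?thesis using z(4) lt by (simp add: mult.commute mult_right_mono)
qed

lemma deriv_ge_bound:
  fixes h h' :: "real \<Rightarrow> real"
  assumes d: "\<And>t. t \<ge> a \<Longrightarrow> (h has_real_derivative h' t) (at t within {a..})"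
    and su: "a \<le> s" "s \<le> u" and K: "\<And>t. s < t \<Longrightarrow> t < u \<Longrightarrow> h' t \<ge> K"
  shows "h u - h s \<ge> K * (u - s)"
proof -
  have "(\<lambda>t. - h t) u - (\<lambda>t. - h t) s \<le> (- K) * (u - s)"
    by (rule deriv_le_bound[of a _ "\<lambda>t. - h' t"]) (use d su K in \<open>auto intro: derivative_eq_intros\<close>)
  then show ?thesis by simp
qed


lemma conv_lemma:
  fixes V V' z :: "real \<Rightarrow> real"
  assumes d: "\<And>t. t \<ge> 0 \<Longrightarrow> (V has_real_derivative V' t) (at t within {0..})"
    and Vb: "\<And>t. t \<ge> 0 \<Longrightarrow> V t \<ge> Vmin"
    and Vd: "\<And>t. t \<ge> 0 \<Longrightarrow> V' t \<le> - k * (z t)^2" and k: "k > 0"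
    and zl: "\<And>s t. 0 \<le> s \<Longrightarrow> s \<le> t \<Longrightarrow> \<bar>z t - z s\<bar> \<le> L * (t - s)" and L: "L > 0"
  shows "(z \<longlongrightarrow> 0) at_top"
proof -
  have V'0: "V' t \<le> 0" if "t \<ge> 0" for t
  proof -
    have "k * (z t)^2 \<ge> 0" using k by simp
    then show ?thesis using Vd[OF that] by linarith
  qed
  have Vmono: "V u \<le> V s" if "0 \<le> s" "s \<le> u" for s u
    using deriv_le_bound[OF d that, of 0] V'0 that by auto
  define l where "l = Inf (V ` {0..})"
  have ne: "V ` {0..} \<noteq> {}" by auto
  have bdd: "bdd_below (V ` {0..})" unfolding bdd_below_def using Vb by auto
  have lV: "l \<le> V t" if "t \<ge> 0" for t unfolding l_def using bdd that by (auto intro: cInf_lower)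
  have ev: "\<forall>\<^sub>F t in at_top. \<bar>z t\<bar> < e" if e: "e > 0" for e
  proof (rule ccontr)
    assume nev: "\<not> (\<forall>\<^sub>F t in at_top. \<bar>z t\<bar> < e)"
    define \<delta> where "\<delta> = e / (2 * L)"
    have \<delta>p: "\<delta> > 0" unfolding \<delta>_def using e L by simp
    define \<eta> where "\<eta> = k * (e / 2)^2 * \<delta>"
    have \<eta>p: "\<eta> > 0" unfolding \<eta>_def using k e \<delta>p by simp
    have "l < l + \<eta>" using \<eta>p by simp
    then obtain N where N: "N \<ge> 0" "V N < l + \<eta>"
      using cInf_less_iff[OF ne bdd, of "l + \<eta>"] unfolding l_def by auto
    have "\<exists>t\<ge>N. \<not> \<bar>z t\<bar> < e" using nev unfolding eventually_at_top_linorder by blast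
    then obtain t where t: "t \<ge> N" "\<bar>z t\<bar> \<ge> e" by (auto simp: not_less)
    have t0: "t \<ge> 0" using t N by simp
    have zs: "\<bar>z s\<bar> \<ge> e / 2" if "t \<le> s" "s \<le> t + \<delta>" for s
    proof -
      have "\<bar>z s - z t\<bar> \<le> L * (s - t)" using zl[of t s] t0 that by simp
      also have "\<dots> \<le> L * \<delta>" using that L by (intro mult_left_mono) auto
      also have "\<dots> = e / 2" unfolding \<delta>_def using L by simp
      finally show ?thesis using t(2) by linarith
    qed
    have V's: "V' s \<le> - (k * (e / 2)^2)" if "t < s" "s < t + \<delta>" for s
    proof -
      have "(e / 2)^2 \<le> \<bar>z s\<bar>^2"
        using zs[of s] that e by (intro power_mono) auto
      then have "(e / 2)^2 \<le> (z s)^2" by simp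
      then have "k * (e / 2)^2 \<le> k * (z s)^2" using k by simp
      then show ?thesis using Vd[of s] that t0 by simp
    qed
    have "V (t + \<delta>) - V t \<le> - (k * (e / 2)^2) * ((t + \<delta>) - t)"
      by (rule deriv_le_bound[OF d]) (use t0 \<delta>p V's in auto)
    then have "V (t + \<delta>) \<le> V t - \<eta>" unfolding \<eta>_def by simp
    also have "V t \<le> V N" using Vmono N t by simp
    finally have "V (t + \<delta>) < l" using N by simp
    then show False using lV[of "t + \<delta>"] t0 \<delta>p by simp
  qed
  show ?thesis
    by (rule tendstoI) (use ev in \<open>auto simp: dist_real_def\<close>)
qed


lemma lin_conv:
  fixes e g :: "real \<Rightarrow> real"
  assumes d: "\<And>t. t \<ge> 0 \<Longrightarrow> (e has_real_derivative (g t - e t / T)) (at t within {0..})"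
    and T: "T > 0" and g: "(g \<longlongrightarrow> 0) at_top"
  shows "(e \<longlongrightarrow> 0) at_top"
proof (rule tendstoI)
  fix r :: real assume r: "r > 0"
  define \<epsilon> where "\<epsilon> = r / (4 * T)"
  have \<epsilon>p: "\<epsilon> > 0" unfolding \<epsilon>_def using r T by simp
  have "\<forall>\<^sub>F t in at_top. dist (g t) 0 < \<epsilon>" using tendstoD[OF g \<epsilon>p] .
  then obtain t1 where t1: "\<And>t. t \<ge> t1 \<Longrightarrow> \<bar>g t\<bar> < \<epsilon>"
    unfolding eventually_at_top_linorder dist_real_def by auto
  define t0 where "t0 = max t1 0"
  have t0: "t0 \<ge> 0" "\<And>t. t \<ge> t0 \<Longrightarrow> \<bar>g t\<bar> < \<epsilon>" unfolding t0_def using t1 by auto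
  define w1 where "w1 = (\<lambda>t. (e t - \<epsilon> * T) * exp (t / T))"
  define w2 where "w2 = (\<lambda>t. (e t + \<epsilon> * T) * exp (t / T))"
  have dw1: "(w1 has_real_derivative (g t - \<epsilon>) * exp (t / T)) (at t within {t0..})" if "t \<ge> t0" for t
  proof -
    have "(e has_real_derivative (g t - e t / T)) (at t within {t0..})"
      using d[of t] that t0 by (auto intro: has_field_derivative_subset)
    then have "(w1 has_real_derivative ((g t - e t / T) * exp (t / T) + (e t - \<epsilon> * T) * (exp (t / T) * (1 / T)))) (at t within {t0..})"
      unfolding w1_def using T by (auto intro!: derivative_eq_intros)
    moreover have "(g t - e t / T) * exp (t / T) + (e t - \<epsilon> * T) * (exp (t / T) * (1 / T)) = (g t - \<epsilon>) * exp (t / T)"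
      using T by (simp add: field_simps)
    ultimately show ?thesis by simp
  qed
  have dw2: "(w2 has_real_derivative (g t + \<epsilon>) * exp (t / T)) (at t within {t0..})" if "t \<ge> t0" for t
  proof -
    have "(e has_real_derivative (g t - e t / T)) (at t within {t0..})"
      using d[of t] that t0 by (auto intro: has_field_derivative_subset)
    then have "(w2 has_real_derivative ((g t - e t / T) * exp (t / T) + (e t + \<epsilon> * T) * (exp (t / T) * (1 / T)))) (at t within {t0..})"
      unfolding w2_def using T by (auto intro!: derivative_eq_intros)
    moreover have "(g t - e t / T) * exp (t / T) + (e t + \<epsilon> * T) * (exp (t / T) * (1 / T)) = (g t + \<epsilon>) * exp (t / T)"
      using T by (simp add: field_simps)
    ultimately show ?thesis by simp
  qed
  define C where "C = \<bar>e t0 - \<epsilon> * T\<bar> + \<bar>e t0 + \<epsilon> * T\<bar>"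
  have C0: "C \<ge> 0" unfolding C_def by simp
  have bound: "\<bar>e t\<bar> \<le> \<epsilon> * T + C * exp ((t0 - t) / T)" if tt: "t \<ge> t0" for t
  proof -
    have neg: "(g s - \<epsilon>) * exp (s / T) \<le> 0" if "t0 < s" for s
    proof -
      have "g s - \<epsilon> \<le> 0" using t0(2)[of s] that by simp
      then show ?thesis by (simp add: mult_nonpos_nonneg)
    qed
    have pos: "(g s + \<epsilon>) * exp (s / T) \<ge> 0" if "t0 < s" for s
    proof -
      have "g s + \<epsilon> \<ge> 0" using t0(2)[of s] that by simp
      then show ?thesis by simp
    qed
    have "w1 t - w1 t0 \<le> 0 * (t - t0)"
      by (rule deriv_le_bound[OF dw1 order.refl tt]) (blast, blast intro: neg)
    then have A: "(e t - \<epsilon> * T) * exp (t / T) \<le> (e t0 - \<epsilon> * T) * exp (t0 / T)" unfolding w1_def by simp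
    have ex: "exp (t0 / T) = exp ((t0 - t) / T) * exp (t / T)"
      by (simp add: exp_add[symmetric] diff_divide_distrib)
    have ept: "exp (t / T) > 0" by simp
    from A have "(e t - \<epsilon> * T) * exp (t / T) \<le> ((e t0 - \<epsilon> * T) * exp ((t0 - t) / T)) * exp (t / T)"
      unfolding ex by (simp add: mult.assoc)
    then have "e t - \<epsilon> * T \<le> (e t0 - \<epsilon> * T) * exp ((t0 - t) / T)"
      using ept by (simp only: mult_le_cancel_right_pos)
    also have "\<dots> \<le> C * exp ((t0 - t) / T)" unfolding C_def by (intro mult_right_mono) auto
    finally have up: "e t \<le> \<epsilon> * T + C * exp ((t0 - t) / T)" by simp
    have "w2 t - w2 t0 \<ge> 0 * (t - t0)"
      by (rule deriv_ge_bound[OF dw2 order.refl tt]) (blast, blast intro: pos)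
    then have B: "(e t0 + \<epsilon> * T) * exp (t0 / T) \<le> (e t + \<epsilon> * T) * exp (t / T)" unfolding w2_def by simp
    from B have "((e t0 + \<epsilon> * T) * exp ((t0 - t) / T)) * exp (t / T) \<le> (e t + \<epsilon> * T) * exp (t / T)"
      unfolding ex by (simp add: mult.assoc)
    then have B2: "(e t0 + \<epsilon> * T) * exp ((t0 - t) / T) \<le> e t + \<epsilon> * T"
      using ept by (simp only: mult_le_cancel_right_pos)
    have "- C \<le> e t0 + \<epsilon> * T" unfolding C_def by linarith
    then have "- C * exp ((t0 - t) / T) \<le> (e t0 + \<epsilon> * T) * exp ((t0 - t) / T)"
      by (intro mult_right_mono) auto
    then have lo: "- (\<epsilon> * T + C * exp ((t0 - t) / T)) \<le> e t" using B2 by linarith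
    show ?thesis using up lo by linarith
  qed
  have small: "C * exp ((t0 - t) / T) \<le> \<epsilon> * T" if tt: "t \<ge> t0 + C / \<epsilon>" for t
  proof -
    define x where "x = (t - t0) / T"
    have ce: "C / \<epsilon> \<ge> 0" using C0 \<epsilon>p by simp
    have x0: "x \<ge> 0" unfolding x_def using tt ce T by simp
    have exm: "exp ((t0 - t) / T) = exp (- x)" unfolding x_def by (simp add: minus_divide_left)
    have "1 + x \<le> exp x" by (rule exp_ge_add_one_self)
    then have "exp (- x) * (1 + x) \<le> exp (- x) * exp x" by (intro mult_left_mono) auto
    then have ex: "exp (- x) * (1 + x) \<le> 1" by (simp add: exp_minus)
    have "C \<le> \<epsilon> * (t - t0)"
    proof -
      have "C / \<epsilon> \<le> t - t0" using tt by simp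
      then show ?thesis using \<epsilon>p by (simp add: divide_le_eq mult.commute)
    qed
    also have "\<epsilon> * (t - t0) = \<epsilon> * T * x" unfolding x_def using T by simp
    also have "\<dots> \<le> \<epsilon> * T * (1 + x)" using \<epsilon>p T by simp
    finally have "C * exp (- x) \<le> \<epsilon> * T * (1 + x) * exp (- x)" by (intro mult_right_mono) auto
    also have "\<dots> = (\<epsilon> * T) * (exp (- x) * (1 + x))" by simp
    also have "\<dots> \<le> (\<epsilon> * T) * 1" using ex \<epsilon>p T by (intro mult_left_mono) auto
    finally show ?thesis unfolding exm by simp
  qed
  have lt: "2 * \<epsilon> * T < r" unfolding \<epsilon>_def using T r by simp
  have "\<forall>\<^sub>F t in at_top. \<bar>e t\<bar> \<le> 2 * \<epsilon> * T"
    unfolding eventually_at_top_linorder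
  proof (intro exI[of _ "t0 + C / \<epsilon>"] allI impI)
    fix t assume "t \<ge> t0 + C / \<epsilon>"
    moreover have "t0 \<le> t0 + C / \<epsilon>" using C0 \<epsilon>p by simp
    ultimately show "\<bar>e t\<bar> \<le> 2 * \<epsilon> * T" using bound[of t] small[of t] by simp
  qed
  then show "\<forall>\<^sub>F t in at_top. dist (e t) 0 < r"
    by eventually_elim (use lt in \<open>simp add: dist_real_def\<close>)
qed


context model begin

lemma Fm_mono: "(\<Sum>j\<in>UNIV. (mu j - nu j) * (Fm j mu - Fm j nu)) \<le> 0"
proof -
  define A where "A i = (\<Sum>j\<in>UNIV. logit eps (kap i) mu j * (mu j - nu j))" for i
  define B where "B i = (\<Sum>j\<in>UNIV. logit eps (kap i) nu j * (mu j - nu j))" for i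
  have eq: "(\<Sum>j\<in>UNIV. (mu j - nu j) * (Fm j mu - Fm j nu)) = (\<Sum>i\<in>UNIV. rr i mu * A i - rr i nu * B i)"
  proof -
    have "(\<Sum>j\<in>UNIV. (mu j - nu j) * (Fm j mu - Fm j nu)) =
        (\<Sum>j\<in>UNIV. \<Sum>i\<in>UNIV. rr i mu * (logit eps (kap i) mu j * (mu j - nu j)) - rr i nu * (logit eps (kap i) nu j * (mu j - nu j)))"
      unfolding Fm_def by (rule sum.cong) (simp_all add: sum_distrib_left sum_subtractf[symmetric] algebra_simps)
    also have "\<dots> = (\<Sum>i\<in>UNIV. \<Sum>j\<in>UNIV. rr i mu * (logit eps (kap i) mu j * (mu j - nu j)) - rr i nu * (logit eps (kap i) nu j * (mu j - nu j)))"
      by (rule sum.swap)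
    also have "\<dots> = (\<Sum>i\<in>UNIV. rr i mu * A i - rr i nu * B i)"
      unfolding A_def B_def by (simp add: sum_subtractf sum_distrib_left)
    finally show ?thesis .
  qed
  have t: "rr i mu * A i - rr i nu * B i \<le> 0" for i
  proof -
    define a where "a = softmin eps (kap i) mu - softmin eps (kap i) nu"
    have g1: "softmin eps (kap i) nu \<le> softmin eps (kap i) mu + (\<Sum>j\<in>UNIV. logit eps (kap i) mu j * (nu j - mu j))"
      by (rule softmin_grad[OF eps_pos])
    have "(\<Sum>j\<in>UNIV. logit eps (kap i) mu j * (nu j - mu j)) = - A i"
      unfolding A_def by (simp add: sum_negf[symmetric] algebra_simps)
    then have Aa: "A i \<le> a" using g1 unfolding a_def by simp
    have g2: "softmin eps (kap i) mu \<le> softmin eps (kap i) nu + B i"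
      unfolding B_def by (rule softmin_grad[OF eps_pos])
    then have Ba: "a \<le> B i" unfolding a_def by simp
    have "rr i mu * A i \<le> rr i mu * a" using Aa rr_ge0 by (intro mult_left_mono) auto
    moreover have "rr i nu * a \<le> rr i nu * B i" using Ba rr_ge0 by (intro mult_left_mono) auto
    moreover have "a * (rr i mu - rr i nu) \<le> 0"
    proof (cases "a \<ge> 0")
      case True
      then have "p i (softmin eps (kap i) mu) \<le> p i (softmin eps (kap i) nu)"
        using p_anti unfolding a_def by simp
      then have "rr i mu \<le> rr i nu" unfolding rr_def using rbar_pos[of i] by (intro mult_left_mono) auto
      then show ?thesis using True by (simp add: mult_nonneg_nonpos)
    next
      case False
      then have "p i (softmin eps (kap i) nu) \<le> p i (softmin eps (kap i) mu)"
        using p_anti unfolding a_def by simp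
      then have "rr i nu \<le> rr i mu" unfolding rr_def using rbar_pos[of i] by (intro mult_left_mono) auto
      then show ?thesis using False by (simp add: mult_nonpos_nonneg)
    qed
    ultimately show ?thesis by (simp add: algebra_simps)
  qed
  show ?thesis unfolding eq by (rule sum_nonpos) (use t in auto)
qed

end


locale traj = equil T eps c kap rbar p f U qs
  for T eps :: real
    and c :: "'s::finite \<Rightarrow> real"
    and kap :: "'l::finite \<Rightarrow> 's \<Rightarrow> real"
    and rbar :: "'l \<Rightarrow> real"
    and p :: "'l \<Rightarrow> real \<Rightarrow> real"
    and f :: "'l \<Rightarrow> real \<Rightarrow> real"
    and U :: "'l \<Rightarrow> real \<Rightarrow> real"
    and qs :: "'s \<Rightarrow> real" +
  fixes q :: "real \<Rightarrow> 's \<Rightarrow> real"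
  assumes q_init: "\<And>j. q 0 j \<ge> 0"
    and q_ode: "\<And>t j. t \<ge> 0 \<Longrightarrow>
      ((\<lambda>s. q s j) has_real_derivative (Fm j (muof (q t)) - q t j / T)) (at t within {0..})"
begin

definition Qb :: "'s \<Rightarrow> real" where "Qb j = max (q 0 j) (T * Rtot)"
definition Mb :: "'s \<Rightarrow> real" where "Mb j = Rtot + Qb j / T"

lemma q_lower: assumes t: "t \<ge> 0" shows "q t j \<ge> 0"
proof -
  define w where "w = (\<lambda>s. q s j * exp (s / T))"
  have dw: "(w has_real_derivative Fm j (muof (q s)) * exp (s / T)) (at s within {0..})" if "s \<ge> 0" for s
  proof -
    have "(w has_real_derivative ((Fm j (muof (q s)) - q s j / T) * exp (s / T) + q s j * (exp (s / T) * (1 / T)))) (at s within {0..})"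
      unfolding w_def using T_pos by (auto intro!: derivative_eq_intros q_ode that)
    moreover have "(Fm j (muof (q s)) - q s j / T) * exp (s / T) + q s j * (exp (s / T) * (1 / T)) = Fm j (muof (q s)) * exp (s / T)"
      using T_pos by (simp add: field_simps)
    ultimately show ?thesis by simp
  qed
  have "w t - w 0 \<ge> 0 * (t - 0)"
    by (rule deriv_ge_bound[OF dw order.refl t]) (blast, simp add: Fm_ge0)
  then have "q t j * exp (t / T) \<ge> q 0 j" unfolding w_def by simp
  then have "q t j * exp (t / T) \<ge> 0" using q_init[of j] by linarith
  then show ?thesis by (simp add: zero_le_mult_iff)
qed

lemma q_upper: assumes t: "t \<ge> 0" shows "q t j \<le> Qb j"
proof -
  define w where "w = (\<lambda>s. (q s j - T * Rtot) * exp (s / T))"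
  have dw: "(w has_real_derivative (Fm j (muof (q s)) - Rtot) * exp (s / T)) (at s within {0..})" if "s \<ge> 0" for s
  proof -
    have "(w has_real_derivative ((Fm j (muof (q s)) - q s j / T) * exp (s / T) + (q s j - T * Rtot) * (exp (s / T) * (1 / T)))) (at s within {0..})"
      unfolding w_def using T_pos by (auto intro!: derivative_eq_intros q_ode that)
    moreover have "(Fm j (muof (q s)) - q s j / T) * exp (s / T) + (q s j - T * Rtot) * (exp (s / T) * (1 / T)) = (Fm j (muof (q s)) - Rtot) * exp (s / T)"
      using T_pos by (simp add: field_simps)
    ultimately show ?thesis by simp
  qed
  have neg: "(Fm j (muof (q s)) - Rtot) * exp (s / T) \<le> 0" for s
    using Fm_le[of j "muof (q s)"] by (simp add: mult_nonpos_nonneg)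
  have "w t - w 0 \<le> 0 * (t - 0)"
    by (rule deriv_le_bound[OF dw order.refl t]) (blast, rule neg)
  then have A: "(q t j - T * Rtot) * exp (t / T) \<le> q 0 j - T * Rtot" unfolding w_def by simp
  show ?thesis
  proof (cases "q t j \<le> T * Rtot")
    case True then show ?thesis unfolding Qb_def by simp
  next
    case False
    have "1 \<le> exp (t / T)" using t T_pos by simp
    then have "(q t j - T * Rtot) * 1 \<le> (q t j - T * Rtot) * exp (t / T)"
      using False by (intro mult_left_mono) auto
    then show ?thesis using A unfolding Qb_def by simp
  qed
qed

lemma Mb_ge0: "Mb j \<ge> 0"
proof -
  have "T * Rtot \<ge> 0" using Rtot_ge0 T_pos by simp
  moreover have "Qb j \<ge> T * Rtot" unfolding Qb_def by simp
  ultimately have "Qb j \<ge> 0" by linarith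
  then show ?thesis unfolding Mb_def using Rtot_ge0 T_pos by simp
qed

lemma qdot_bound: assumes "t \<ge> 0" shows "\<bar>Fm j (muof (q t)) - q t j / T\<bar> \<le> Mb j"
proof -
  have "0 \<le> q t j / T" "q t j / T \<le> Qb j / T" using q_lower[OF assms] q_upper[OF assms] T_pos
    by (auto simp: divide_right_mono)
  moreover have "0 \<le> Fm j (muof (q t))" "Fm j (muof (q t)) \<le> Rtot" using Fm_ge0 Fm_le by auto
  ultimately show ?thesis unfolding Mb_def by linarith
qed

lemma q_lip: assumes "0 \<le> s" "s \<le> t" shows "\<bar>q t j - q s j\<bar> \<le> Mb j * (t - s)"
proof -
  have hb: "- Mb j \<le> Fm j (muof (q \<tau>)) - q \<tau> j / T \<and> Fm j (muof (q \<tau>)) - q \<tau> j / T \<le> Mb j"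
    if "s < \<tau>" for \<tau>
    using qdot_bound[of \<tau> j] that assms by (simp add: abs_le_iff)
  have "q t j - q s j \<le> Mb j * (t - s)"
    by (rule deriv_le_bound[of 0 "\<lambda>s. q s j", OF q_ode assms]) (use hb in auto)
  moreover have "q t j - q s j \<ge> (- Mb j) * (t - s)"
    by (rule deriv_ge_bound[of 0 "\<lambda>s. q s j", OF q_ode assms]) (use hb in auto)
  ultimately show ?thesis by (simp add: abs_le_iff)
qed

lemma g_absdiff: "\<bar>gfun (c j) x - gfun (c j) y\<bar> \<le> \<bar>x - y\<bar> / c j"
proof (cases "x \<le> y")
  case True
  have "\<bar>x - y\<bar> = y - x" using True by simp
  then show ?thesis using g_lip[OF c_pos[of j] True] g_mono[OF c_pos[of j] True] by simp
next
  case False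
  then have yx: "y \<le> x" by simp
  have "\<bar>x - y\<bar> = x - y" using yx by simp
  then show ?thesis using g_lip[OF c_pos[of j] yx] g_mono[OF c_pos[of j] yx] by simp
qed

lemma mu_lip: assumes "0 \<le> s" "s \<le> t"
  shows "\<bar>muof (q t) j - muof (q s) j\<bar> \<le> (T / c j * Mb j + 1) * (t - s)"
proof -
  have "\<bar>muof (q t) j - muof (q s) j\<bar> = T * \<bar>gfun (c j) (q t j) - gfun (c j) (q s j)\<bar>"
    unfolding muof_def delay_g using T_pos by (simp add: right_diff_distrib[symmetric] abs_mult)
  also have "\<dots> \<le> T * (\<bar>q t j - q s j\<bar> / c j)" using g_absdiff T_pos by (intro mult_left_mono) auto
  also have "\<dots> \<le> T * (Mb j * (t - s) / c j)"
    using q_lip[OF assms] T_pos c_pos[of j] by (intro mult_left_mono divide_right_mono) auto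
  also have "\<dots> = T / c j * Mb j * (t - s)" by simp
  also have "\<dots> \<le> (T / c j * Mb j + 1) * (t - s)" using assms by (simp add: algebra_simps)
  finally show ?thesis .
qed

end


context traj begin

definition Vf :: "real \<Rightarrow> real" where
  "Vf t = (\<Sum>j\<in>UNIV. T * Gfun (c j) (q t j) - mus j * q t j)"
definition Vd :: "real \<Rightarrow> real" where
  "Vd t = (\<Sum>j\<in>UNIV. (muof (q t) j - mus j) * (Fm j (muof (q t)) - q t j / T))"

lemma V_deriv: assumes t: "t \<ge> 0" shows "(Vf has_real_derivative Vd t) (at t within {0..})"
proof -
  have "((\<lambda>s. T * Gfun (c j) (q s j) - mus j * q s j) has_real_derivative
      (muof (q t) j - mus j) * (Fm j (muof (q t)) - q t j / T)) (at t within {0..})" for j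
  proof -
    have d1: "((\<lambda>s. Gfun (c j) (q s j)) has_real_derivative gfun (c j) (q t j) * (Fm j (muof (q t)) - q t j / T)) (at t within {0..})"
      by (rule DERIV_chain'[OF q_ode[OF t] G_deriv[OF c_pos]])
    have "((\<lambda>s. T * Gfun (c j) (q s j) - mus j * q s j) has_real_derivative
      T * (gfun (c j) (q t j) * (Fm j (muof (q t)) - q t j / T)) - mus j * (Fm j (muof (q t)) - q t j / T)) (at t within {0..})"
      by (rule DERIV_diff[OF DERIV_cmult[OF d1] DERIV_cmult[OF q_ode[OF t]]])
    moreover have "T * (gfun (c j) (q t j) * (Fm j (muof (q t)) - q t j / T)) - mus j * (Fm j (muof (q t)) - q t j / T)
        = (muof (q t) j - mus j) * (Fm j (muof (q t)) - q t j / T)"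
      unfolding muof_def delay_g by (simp add: algebra_simps)
    ultimately show ?thesis by simp
  qed
  then show ?thesis unfolding Vf_def Vd_def by (intro DERIV_sum) auto
qed

lemma V_lower: "Vf t \<ge> (\<Sum>j\<in>UNIV. T * Gfun (c j) (qs j) - mus j * qs j)"
  unfolding Vf_def
proof (rule sum_mono)
  fix j
  have "Gfun (c j) (qs j) + gfun (c j) (qs j) * (q t j - qs j) \<le> Gfun (c j) (q t j)"
    by (rule G_convex[OF c_pos])
  then have "T * (Gfun (c j) (qs j) + gfun (c j) (qs j) * (q t j - qs j)) \<le> T * Gfun (c j) (q t j)"
    using T_pos by (intro mult_left_mono) auto
  moreover have "T * gfun (c j) (qs j) = mus j" unfolding mus_j delay_g ..
  moreover have "T * (Gfun (c j) (qs j) + gfun (c j) (qs j) * (q t j - qs j))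
      = T * Gfun (c j) (qs j) + (T * gfun (c j) (qs j)) * (q t j - qs j)" by (simp add: algebra_simps)
  ultimately show "T * Gfun (c j) (qs j) - mus j * qs j \<le> T * Gfun (c j) (q t j) - mus j * q t j"
    by (simp add: algebra_simps)
qed

lemma V_decay: "Vd t \<le> - (c j0 / T^2) * (muof (q t) j0 - mus j0)^2"
proof -
  define m where "m = muof (q t)"
  define b where "b j = c j / T^2 * (m j - mus j)^2" for j
  have b0: "b j \<ge> 0" for j unfolding b_def using c_pos[of j] T_pos by simp
  have split: "Vd t = (\<Sum>j\<in>UNIV. (m j - mus j) * (Fm j m - Fm j mus)) + (\<Sum>j\<in>UNIV. (m j - mus j) * (qs j - q t j) / T)"
  proof -
    have "Vd t = (\<Sum>j\<in>UNIV. (m j - mus j) * (Fm j m - Fm j mus) + (m j - mus j) * (qs j - q t j) / T)"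
      unfolding Vd_def m_def[symmetric] by (rule sum.cong) (use T_pos in \<open>simp_all add: Fm_mus field_simps\<close>)
    then show ?thesis by (simp add: sum.distrib)
  qed
  have f1: "(\<Sum>j\<in>UNIV. (m j - mus j) * (Fm j m - Fm j mus)) \<le> 0" by (rule Fm_mono)
  have tj: "(m j - mus j) * (qs j - q t j) / T \<le> - b j" for j
  proof -
    have mj: "m j - mus j = T * (gfun (c j) (q t j) - gfun (c j) (qs j))"
      unfolding m_def muof_def mus_j delay_g by (simp add: algebra_simps)
    have gp: "c j * (gfun (c j) (q t j) - gfun (c j) (qs j))^2 \<le> (gfun (c j) (q t j) - gfun (c j) (qs j)) * (q t j - qs j)"
      by (rule g_prod[OF c_pos])
    have "(m j - mus j) * (qs j - q t j) / T = (gfun (c j) (q t j) - gfun (c j) (qs j)) * (qs j - q t j)"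
      unfolding mj using T_pos by simp
    also have "\<dots> = - ((gfun (c j) (q t j) - gfun (c j) (qs j)) * (q t j - qs j))"
      by (simp add: algebra_simps)
    also have "\<dots> \<le> - (c j * (gfun (c j) (q t j) - gfun (c j) (qs j))^2)" using gp by simp
    also have "c j * (gfun (c j) (q t j) - gfun (c j) (qs j))^2 = b j"
      unfolding b_def mj using T_pos by (simp add: power_mult_distrib power2_eq_square field_simps)
    finally show ?thesis .
  qed
  have "(\<Sum>j\<in>UNIV. (m j - mus j) * (qs j - q t j) / T) \<le> (\<Sum>j\<in>UNIV. - b j)"
    by (rule sum_mono) (rule tj)
  also have "(\<Sum>j\<in>UNIV. - b j) \<le> - b j0"
  proof -
    have "b j0 \<le> (\<Sum>j\<in>UNIV. b j)" by (rule member_le_sum) (auto intro: b0)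
    then show ?thesis by (simp add: sum_negf)
  qed
  finally show ?thesis using split f1 unfolding b_def m_def by simp
qed

lemma mu_conv: "((\<lambda>t. muof (q t) j) \<longlongrightarrow> mus j) at_top"
proof -
  have "((\<lambda>t. muof (q t) j - mus j) \<longlongrightarrow> 0) at_top"
  proof (rule conv_lemma[where V = Vf and V' = Vd])
    show "\<And>t. 0 \<le> t \<Longrightarrow> (Vf has_real_derivative Vd t) (at t within {0..})" by (rule V_deriv)
    show "\<And>t. 0 \<le> t \<Longrightarrow> (\<Sum>j\<in>UNIV. T * Gfun (c j) (qs j) - mus j * qs j) \<le> Vf t" by (rule V_lower)
    show "\<And>t. 0 \<le> t \<Longrightarrow> Vd t \<le> - (c j / T^2) * (muof (q t) j - mus j)^2" by (rule V_decay)
    show "0 < c j / T^2" using c_pos[of j] T_pos by simp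
    show "\<And>s t. 0 \<le> s \<Longrightarrow> s \<le> t \<Longrightarrow>
        \<bar>(muof (q t) j - mus j) - (muof (q s) j - mus j)\<bar> \<le> (T / c j * Mb j + 1) * (t - s)"
      using mu_lip by simp
    show "0 < T / c j * Mb j + 1" using T_pos c_pos[of j] Mb_ge0[of j] by (simp add: add_nonneg_pos)
  qed
  then show ?thesis by (rule LIM_zero_cancel)
qed

lemma Fq_conv: "((\<lambda>t. Fm j (muof (q t))) \<longlongrightarrow> qs j / T) at_top"
proof -
  have "((\<lambda>t. Fm j (muof (q t))) \<longlongrightarrow> Fm j mus) at_top"
    by (rule Fm_tendsto) (rule mu_conv)
  then show ?thesis unfolding Fm_mus .
qed

lemma q_conv: "((\<lambda>t. q t j) \<longlongrightarrow> qs j) at_top"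
proof -
  have "((\<lambda>t. q t j - qs j) \<longlongrightarrow> 0) at_top"
  proof (rule lin_conv[where T = T and g = "\<lambda>t. Fm j (muof (q t)) - qs j / T"])
    show "\<And>t. 0 \<le> t \<Longrightarrow> ((\<lambda>t. q t j - qs j) has_real_derivative
        (Fm j (muof (q t)) - qs j / T) - (q t j - qs j) / T) (at t within {0..})"
    proof -
      fix t :: real assume t: "0 \<le> t"
      have "((\<lambda>t. q t j - qs j) has_real_derivative (Fm j (muof (q t)) - q t j / T) - 0) (at t within {0..})"
        by (intro derivative_intros q_ode[OF t])
      moreover have "(Fm j (muof (q t)) - q t j / T) - 0 = (Fm j (muof (q t)) - qs j / T) - (q t j - qs j) / T"
        by (simp add: diff_divide_distrib)
      ultimately show "((\<lambda>t. q t j - qs j) has_real_derivative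
        (Fm j (muof (q t)) - qs j / T) - (q t j - qs j) / T) (at t within {0..})" by (rule DERIV_cong)
    qed
    show "0 < T" by (rule T_pos)
    show "((\<lambda>t. Fm j (muof (q t)) - qs j / T) \<longlongrightarrow> 0) at_top"
      by (rule LIM_zero) (rule Fq_conv)
  qed
  then show ?thesis by (rule LIM_zero_cancel)
qed

end

theorem theorem4:
  fixes T eps :: real
    and c :: "'s::finite \<Rightarrow> real"
    and kap :: "'l::finite \<Rightarrow> 's \<Rightarrow> real"
    and rbar :: "'l \<Rightarrow> real"
    and p :: "'l \<Rightarrow> real \<Rightarrow> real"
    and f :: "'l \<Rightarrow> real \<Rightarrow> real"
    and U :: "'l \<Rightarrow> real \<Rightarrow> real"
    and q :: "real \<Rightarrow> 's \<Rightarrow> real"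
  assumes T_pos: "T > 0" and eps_pos: "eps > 0"
    and c_pos: "\<And>j. c j > 0"
    and rbar_pos: "\<And>i. rbar i > 0"
    \<comment> \<open>T_i is a nonnegative absolutely continuous random variable with density f i,
        and p i is its complementary CDF\<close>
    and f_nonneg: "\<And>i x. f i x \<ge> 0"
    and f_support: "\<And>i x. x < 0 \<Longrightarrow> f i x = 0"
    and f_prob: "\<And>i. (f i has_integral 1) {0..}"
    and p_ccdf: "\<And>i \<tau>. p i \<tau> = integral {\<tau><..} (f i)"
    \<comment> \<open>utilities\<close>
    and U_mono: "\<And>i. mono_on {0..} (U i)"
    and U_concave: "\<And>i. concave_on {0..} (U i)"
    and U_strict: "\<And>i. strictly_concave_on {0..rbar i} (U i)"
    and U_argmax: "\<And>i \<tau> r. \<tau> \<ge> 0 \<Longrightarrow> r \<ge> 0 \<Longrightarrow>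
        U i r - \<tau> * r \<le> U i (rbar i * p i \<tau>) - \<tau> * (rbar i * p i \<tau>)"
    \<comment> \<open>q is a trajectory of the dynamics on [0,\<infinity>) from a nonnegative initial queue\<close>
    and q_init: "\<And>j. q 0 j \<ge> 0"
    and q_ode: "\<And>t j. t \<ge> 0 \<Longrightarrow>
        ((\<lambda>s. q s j) has_real_derivative
           ((\<Sum>i\<in>UNIV. rbar i * p i (softmin eps (kap i) (\<lambda>k. delay T (c k) (q t k)))
                        * logit eps (kap i) (\<lambda>k. delay T (c k) (q t k)) j)
            - q t j / T)) (at t within {0..})"
  shows "\<exists>rs mus Xs qs.
     saddle_point T eps kap c U rbar rs mus \<and>
     (\<forall>r' mu'. saddle_point T eps kap c U rbar r' mu' \<longrightarrow> r' = rs \<and> mu' = mus) \<and>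
     feasible T rs Xs qs \<and>
     (\<forall>X' q'. feasible T rs X' q' \<longrightarrow> objective eps kap c rs Xs qs \<le> objective eps kap c rs X' q') \<and>
     (\<forall>X' q'. feasible T rs X' q' \<and> objective eps kap c rs X' q' \<le> objective eps kap c rs Xs qs
         \<longrightarrow> X' = Xs \<and> q' = qs) \<and>
     \<comment> \<open>it is an equilibrium of the dynamics\<close>
     (\<forall>j. mus j = delay T (c j) (qs j)) \<and>
     (\<forall>i. rs i = rbar i * p i (softmin eps (kap i) mus)) \<and>
     (\<forall>i j. Xs i j = rs i * logit eps (kap i) mus j) \<and>
     (\<forall>j. (\<Sum>i\<in>UNIV. Xs i j) - qs j / T = 0) \<and>
     \<comment> \<open>and the trajectory converges to it\<close>
     (\<forall>j. ((\<lambda>t. q t j) \<longlongrightarrow> qs j) at_top) \<and>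
     (\<forall>j. ((\<lambda>t. delay T (c j) (q t j)) \<longlongrightarrow> mus j) at_top) \<and>
     (\<forall>i. ((\<lambda>t. rbar i * p i (softmin eps (kap i) (\<lambda>k. delay T (c k) (q t k))))
            \<longlongrightarrow> rs i) at_top) \<and>
     (\<forall>i j. ((\<lambda>t. rbar i * p i (softmin eps (kap i) (\<lambda>k. delay T (c k) (q t k)))
              * logit eps (kap i) (\<lambda>k. delay T (c k) (q t k)) j) \<longlongrightarrow> Xs i j) at_top)"
  proof -
  interpret M: model T eps c kap rbar p f U
    by (unfold_locales) (use T_pos eps_pos c_pos rbar_pos f_nonneg f_support f_prob p_ccdf U_mono U_strict U_argmax in auto)
  obtain qs where qs: "\<And>j. qs j = T * M.Fm j (M.muof qs)" using M.equilibrium_exists by blast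
  interpret E: equil T eps c kap rbar p f U qs
    using M.model_axioms qs by (simp add: equil_def equil_axioms_def)
  have qode: "\<And>t j. t \<ge> 0 \<Longrightarrow>
      ((\<lambda>s. q s j) has_real_derivative (M.Fm j (M.muof (q t)) - q t j / T)) (at t within {0..})"
    using q_ode unfolding M.Fm_def M.rr_def M.muof_def by simp
  interpret Tr: traj T eps c kap rbar p f U qs q
    using E.equil_axioms q_init qode by (simp add: traj_def traj_axioms_def)
  have mu_conv': "\<And>k. ((\<lambda>t. M.muof (q t) k) \<longlongrightarrow> E.mus k) at_top" by (rule Tr.mu_conv)
  have rconv: "((\<lambda>t. M.rr i (M.muof (q t))) \<longlongrightarrow> E.rs i) at_top" for i
    unfolding E.rs_def by (rule M.rr_tendsto[OF mu_conv'])
  have lconv: "((\<lambda>t. logit eps (kap i) (M.muof (q t)) j) \<longlongrightarrow> logit eps (kap i) E.mus j) at_top" for i j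
    by (rule M.logit_tendsto[OF mu_conv'])
  show ?thesis
  proof (intro exI conjI allI impI)
    show "saddle_point T eps kap c U rbar E.rs E.mus" by (rule E.saddle_rs)
    show "\<And>r' mu'. saddle_point T eps kap c U rbar r' mu' \<Longrightarrow> r' = E.rs" using E.saddle_unique by blast
    show "\<And>r' mu'. saddle_point T eps kap c U rbar r' mu' \<Longrightarrow> mu' = E.mus" using E.saddle_unique by blast
    show "feasible T E.rs E.Xs qs" by (rule E.feasible_s)
    show "\<And>X' q'. feasible T E.rs X' q' \<Longrightarrow> objective eps kap c E.rs E.Xs qs \<le> objective eps kap c E.rs X' q'"
      by (rule E.obj_opt(1))
    show "\<And>X' q'. feasible T E.rs X' q' \<and> objective eps kap c E.rs X' q' \<le> objective eps kap c E.rs E.Xs qs \<Longrightarrow> X' = E.Xs"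
      using E.obj_opt(2) by blast
    show "\<And>X' q'. feasible T E.rs X' q' \<and> objective eps kap c E.rs X' q' \<le> objective eps kap c E.rs E.Xs qs \<Longrightarrow> q' = qs"
      using E.obj_opt(2) by blast
    show "\<And>j. E.mus j = delay T (c j) (qs j)" by (rule E.mus_j)
    show "\<And>i. E.rs i = rbar i * p i (softmin eps (kap i) E.mus)" unfolding E.rs_def M.rr_def ..
    show "\<And>i j. E.Xs i j = E.rs i * logit eps (kap i) E.mus j" unfolding E.Xs_def ..
    show "\<And>j. (\<Sum>i\<in>UNIV. E.Xs i j) - qs j / T = 0" using E.Xs_colsum by simp
    show "\<And>j. ((\<lambda>t. q t j) \<longlongrightarrow> qs j) at_top" by (rule Tr.q_conv)
    show "\<And>j. ((\<lambda>t. delay T (c j) (q t j)) \<longlongrightarrow> E.mus j) at_top"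
      using mu_conv' unfolding M.muof_def by simp
    show "\<And>i. ((\<lambda>t. rbar i * p i (softmin eps (kap i) (\<lambda>k. delay T (c k) (q t k)))) \<longlongrightarrow> E.rs i) at_top"
      using rconv unfolding M.rr_def M.muof_def by simp
    show "\<And>i j. ((\<lambda>t. rbar i * p i (softmin eps (kap i) (\<lambda>k. delay T (c k) (q t k)))
              * logit eps (kap i) (\<lambda>k. delay T (c k) (q t k)) j) \<longlongrightarrow> E.Xs i j) at_top"
    proof -
      fix i j
      have "((\<lambda>t. M.rr i (M.muof (q t)) * logit eps (kap i) (M.muof (q t)) j) \<longlongrightarrow> E.rs i * logit eps (kap i) E.mus j) at_top"
        by (rule tendsto_mult[OF rconv lconv])
      then show "((\<lambda>t. rbar i * p i (softmin eps (kap i) (\<lambda>k. delay T (c k) (q t k)))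
              * logit eps (kap i) (\<lambda>k. delay T (c k) (q t k)) j) \<longlongrightarrow> E.Xs i j) at_top"
        unfolding E.Xs_def M.rr_def M.muof_def by simp
    qed
  qed
qed

end
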